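(* Let $R$ be a commutative $\mathbb{Q}$-algebra with unity, let $\Delta=(V,\mathcal{A})$ be a finite digraph (multi-arcs and multi-loops allowed), and let $\tau,\upsilon:\mathcal{A}\to R$ be arbitrary maps. Define $\theta^{\rm G}:\mathcal{A}\times\mathcal{A}\to R$ by $$\theta^{\rm G}(a,a')=\tau(a')\,\delta_{\mathfrak{h}(a)\mathfrak{t}(a')}-\upsilon(a')\,\delta_{a'\in S(a)}.$$ Then, in $R[[t]]$, $$Z_{\Delta}(t;\theta^{\rm G})^{-1}=f_{\Delta}(t)\,\det\!\left(I-tA_{\Delta}(\theta^{\rm G})+t^2D_{\Delta}(\theta^{\rm G})\right),$$ where $I$ is the identity matrix of size $|V|$ and $f_\Delta$, $A_\Delta(\theta^{\rm G})$, $D_\Delta(\theta^{\rm G})$ are as defined in the context.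
   Context: A finite digraph $\Delta=(V,\mathcal{A})$ consists of a finite vertex set $V$ and a finite multiset $\mathcal{A}$ of arcs; each arc $a$ has a tail $\mathfrak{t}(a)\in V$ and head $\mathfrak{h}(a)\in V$ (loops $\mathfrak{t}(a)=\mathfrak{h}(a)$ and parallel arcs are allowed). For $u,v\in V$ let $\mathcal{A}_{uv}=\{a\in\mathcal{A}:\mathfrak{t}(a)=u,\mathfrak{h}(a)=v\}$. For $a\in\mathcal{A}_{uv}$ put $S(a)=\mathcal{A}_{vu}$ (the set of inverse arcs of $a$; in particular every loop at $u$ is an inverse of every loop at $u$, including itself); $\delta_{a'\in S(a)}$ is $1$ if $a'\in S(a)$ and $0$ otherwise, and $\delta_{xy}$ is the Kronecker delta. Zeta function: for a map $\theta:\mathcal{A}\times\mathcal{A}\to R$ and $m\ge1$, let $N_m(\theta)=\sum \theta(a_1,a_2)\theta(a_2,a_3)\cdots\theta(a_{m-1},a_m)\theta(a_m,a_1)$, the sum running over all sequences $(a_1,\dots,a_m)\in\mathcal{A}^m$ with $\mathfrak{h}(a_i)=\mathfrak{t}(a_{i+1})$ for $1\le i\le m-1$ and $\mathfrak{h}(a_m)=\mathfrak{t}(a_1)$ (closed paths of length $m$). Then $Z_\Delta(t;\theta)=\exp\left(\sum_{m\ge1}\frac{N_m(\theta)}{m}t^m\right)\in R[[t]]$. Fix a total order $\le$ on $V$. Let $\mathcal{A}(u,v)=\mathcal{A}_{uv}\cup\mathcal{A}_{vu}$ and $\Phi_\Delta=\{(u,v)\in V\times V: u\le v,\ \mathcal{A}(u,v)\neq\emptyset\}$,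 and let $\Phi^{(3)}_\Delta=\{(u,v)\in\Phi_\Delta: u\ne v,\ \mathcal{A}_{uv}\ne\emptyset,\ \mathcal{A}_{vu}\neq\emptyset\}$. For $(u,v)\in V\times V$ define $$f_{(u,v)}(t)=\begin{cases}1+t\sum_{a\in\mathcal{A}_{uu}}\upsilon(a), & u=v,\\ 1-t^2\Big(\sum_{a\in\mathcal{A}_{uv}}\upsilon(a)\Big)\Big(\sum_{a\in\mathcal{A}_{vu}}\upsilon(a)\Big), & u\ne v,\end{cases}$$ which is invertible in $R[[t]]$, and $f_\Delta(t)=\prod_{(u,v)\in\Phi_\Delta}f_{(u,v)}(t)$. For $u,v\in V$ put $a_{uv}=\sum_{a\in\mathcal{A}_{uv}}\tau(a)$ and $d_{uv}=\sum_{a\in\mathcal{A}_{uv},\,a'\in\mathcal{A}_{vu}}\tau(a)\upsilon(a')$. Then $A_\Delta(\theta^{\rm G})$ and $D_\Delta(\theta^{\rm G})$ are the $V\times V$ matrices over $R[[t]]$ with entries $$A_\Delta(\theta^{\rm G})_{ww'}=f_{(w,w')}(t)^{-1}a_{ww'},\qquad D_\Delta(\theta^{\rm G})_{ww'}=\delta_{ww'}\sum_{(u,v)\in\Phi^{(3)}_\Delta}f_{(u,v)}(t)^{-1}\left(\delta_{wu}d_{uv}+\delta_{wv}d_{vu}\right).$$ *)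

theory Defs
  imports "HOL-Analysis.Analysis" "HOL-Computational_Algebra.Formal_Power_Series"
begin

text \<open>A finite digraph: vertex set = the finite, linearly ordered type 'v;
  arcs = a finite set A of arc labels (parallel arcs / loops = distinct labels
  with equal tail/head), with tail and head maps tail, head.\<close>

definition rinv :: "'r::comm_ring_1 \<Rightarrow> 'r" where
  "rinv x = (THE y. x * y = 1)"

definition finv :: "'r::comm_ring_1 fps \<Rightarrow> 'r fps" where
  "finv g = (THE h. g * h = 1)"

text \<open>Exponential of a power series with zero constant term, over a Q-algebra.\<close>
definition fps_exp_R :: "'r::comm_ring_1 fps \<Rightarrow> 'r fps" where
  "fps_exp_R g = Abs_fps (\<lambda>n. \<Sum>k\<le>n. rinv (of_nat (fact k)) * fps_nth (g ^ k) n)"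

definition arcs_between :: "'e set \<Rightarrow> ('e \<Rightarrow> 'v) \<Rightarrow> ('e \<Rightarrow> 'v) \<Rightarrow> 'v \<Rightarrow> 'v \<Rightarrow> 'e set" where
  "arcs_between A tail head u v = {a \<in> A. tail a = u \<and> head a = v}"

definition inv_arcs :: "'e set \<Rightarrow> ('e \<Rightarrow> 'v) \<Rightarrow> ('e \<Rightarrow> 'v) \<Rightarrow> 'e \<Rightarrow> 'e set" where
  "inv_arcs A tail head a = arcs_between A tail head (head a) (tail a)"

definition N_paths :: "'e set \<Rightarrow> ('e \<Rightarrow> 'v) \<Rightarrow> ('e \<Rightarrow> 'v) \<Rightarrow> ('e \<Rightarrow> 'e \<Rightarrow> 'r::comm_ring_1) \<Rightarrow> nat \<Rightarrow> 'r" where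
  "N_paths A tail head \<theta> m =
     (\<Sum>p \<in> {..<m} \<rightarrow>\<^sub>E A.
        if (\<forall>i<m. head (p i) = tail (p ((i + 1) mod m)))
        then (\<Prod>i<m. \<theta> (p i) (p ((i + 1) mod m))) else 0)"

definition zeta :: "'e set \<Rightarrow> ('e \<Rightarrow> 'v) \<Rightarrow> ('e \<Rightarrow> 'v) \<Rightarrow> ('e \<Rightarrow> 'e \<Rightarrow> 'r::comm_ring_1) \<Rightarrow> 'r fps" where
  "zeta A tail head \<theta> =
     fps_exp_R (Abs_fps (\<lambda>m. if m = 0 then 0 else rinv (of_nat m) * N_paths A tail head \<theta> m))"

definition thetaG :: "'e set \<Rightarrow> ('e \<Rightarrow> 'v) \<Rightarrow> ('e \<Rightarrow> 'v) \<Rightarrow> ('e \<Rightarrow> 'r::comm_ring_1) \<Rightarrow> ('e \<Rightarrow> 'r) \<Rightarrow> 'e \<Rightarrow> 'e \<Rightarrow> 'r" where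
  "thetaG A tail head \<tau> \<upsilon> a a' =
     \<tau> a' * (if head a = tail a' then 1 else 0) - \<upsilon> a' * (if a' \<in> inv_arcs A tail head a then 1 else 0)"

definition f_pair :: "'e set \<Rightarrow> ('e \<Rightarrow> 'v) \<Rightarrow> ('e \<Rightarrow> 'v) \<Rightarrow> ('e \<Rightarrow> 'r::comm_ring_1) \<Rightarrow> 'v \<Rightarrow> 'v \<Rightarrow> 'r fps" where
  "f_pair A tail head \<upsilon> u v =
     (if u = v then 1 + fps_const (\<Sum>a\<in>arcs_between A tail head u u. \<upsilon> a) * fps_X
      else 1 - fps_const ((\<Sum>a\<in>arcs_between A tail head u v. \<upsilon> a) * (\<Sum>a\<in>arcs_between A tail head v u. \<upsilon> a)) * fps_X ^ 2)"

definition Phi :: "'e set \<Rightarrow> ('e \<Rightarrow> 'v::linorder) \<Rightarrow> ('e \<Rightarrow> 'v) \<Rightarrow> ('v \<times> 'v) set" where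
  "Phi A tail head = {(u, v). u \<le> v \<and> arcs_between A tail head u v \<union> arcs_between A tail head v u \<noteq> {}}"

definition Phi3 :: "'e set \<Rightarrow> ('e \<Rightarrow> 'v::linorder) \<Rightarrow> ('e \<Rightarrow> 'v) \<Rightarrow> ('v \<times> 'v) set" where
  "Phi3 A tail head = {(u, v) \<in> Phi A tail head. u \<noteq> v \<and> arcs_between A tail head u v \<noteq> {} \<and> arcs_between A tail head v u \<noteq> {}}"

definition f_Delta :: "'e set \<Rightarrow> ('e \<Rightarrow> 'v::linorder) \<Rightarrow> ('e \<Rightarrow> 'v) \<Rightarrow> ('e \<Rightarrow> 'r::comm_ring_1) \<Rightarrow> 'r fps" where
  "f_Delta A tail head \<upsilon> = (\<Prod>(u, v)\<in>Phi A tail head. f_pair A tail head \<upsilon> u v)"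

definition a_coef :: "'e set \<Rightarrow> ('e \<Rightarrow> 'v) \<Rightarrow> ('e \<Rightarrow> 'v) \<Rightarrow> ('e \<Rightarrow> 'r::comm_ring_1) \<Rightarrow> 'v \<Rightarrow> 'v \<Rightarrow> 'r" where
  "a_coef A tail head \<tau> u v = (\<Sum>a\<in>arcs_between A tail head u v. \<tau> a)"

definition d_coef :: "'e set \<Rightarrow> ('e \<Rightarrow> 'v) \<Rightarrow> ('e \<Rightarrow> 'v) \<Rightarrow> ('e \<Rightarrow> 'r::comm_ring_1) \<Rightarrow> ('e \<Rightarrow> 'r) \<Rightarrow> 'v \<Rightarrow> 'v \<Rightarrow> 'r" where
  "d_coef A tail head \<tau> \<upsilon> u v =
     (\<Sum>a\<in>arcs_between A tail head u v. \<Sum>a'\<in>arcs_between A tail head v u. \<tau> a * \<upsilon> a')"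

definition A_mat :: "'e set \<Rightarrow> ('e \<Rightarrow> 'v::finite) \<Rightarrow> ('e \<Rightarrow> 'v) \<Rightarrow> ('e \<Rightarrow> 'r::comm_ring_1) \<Rightarrow> ('e \<Rightarrow> 'r) \<Rightarrow> 'r fps ^ 'v ^ 'v" where
  "A_mat A tail head \<tau> \<upsilon> = (\<chi> w w'. finv (f_pair A tail head \<upsilon> w w') * fps_const (a_coef A tail head \<tau> w w'))"

definition D_mat :: "'e set \<Rightarrow> ('e \<Rightarrow> 'v) \<Rightarrow> ('e \<Rightarrow> 'v) \<Rightarrow> ('e \<Rightarrow> 'r::comm_ring_1) \<Rightarrow> ('e \<Rightarrow> 'r) \<Rightarrow> 'r fps ^ 'v::{finite,linorder} ^ 'v::{finite,linorder}" where
  "D_mat A tail head \<tau> \<upsilon> = (\<chi> w w'. if w = w' then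
      (\<Sum>(u, v)\<in>Phi3 A tail head. finv (f_pair A tail head \<upsilon> u v) *
         fps_const ((if w = u then d_coef A tail head \<tau> \<upsilon> u v else 0) + (if w = v then d_coef A tail head \<tau> \<upsilon> v u else 0)))
     else 0)"

end

theory Submission
  imports Defs "HOL-Library.Function_Algebras"
begin

section \<open>Units in rings and power series\<close>

lemma rinv_eq:
  fixes x y :: "'r::comm_ring_1"
  assumes "x * y = 1" shows "rinv x = y"
proof -
  have u: "\<And>z. x * z = 1 \<Longrightarrow> z = y"
  proof -
    fix z assume "x * z = 1"
    then have "y * (x * z) = y" by simp
    then show "z = y" using assms by (simp add: mult.assoc[symmetric] mult.commute)
  qed
  show ?thesis unfolding rinv_def
    using assms u by (intro the_equality) blast+
qed

lemma finv_eq: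
  fixes g h :: "'r::comm_ring_1 fps"
  assumes "g * h = 1" shows "finv g = h"
proof -
  have u: "\<And>z. g * z = 1 \<Longrightarrow> z = h"
  proof -
    fix z assume "g * z = 1"
    then have "h * (g * z) = h" by simp
    then show "z = h" using assms by (simp add: mult.assoc[symmetric] mult.commute)
  qed
  show ?thesis unfolding finv_def
    using assms u by (intro the_equality) blast+
qed

lemma finv_right:
  fixes g :: "'r::comm_ring_1 fps"
  assumes "fps_nth g 0 = 1" shows "g * finv g = 1"
proof -
  have "g * fps_right_inverse g 1 = 1"
    by (rule fps_right_inverse) (simp add: assms)
  then show ?thesis using finv_eq by metis
qed

lemma finv_left:
  fixes g :: "'r::comm_ring_1 fps"
  assumes "fps_nth g 0 = 1" shows "finv g * g = 1"
  using finv_right[OF assms] by (simp add: mult.commute)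

lemma fps_X_mult_eq_0:
  fixes h :: "'r::comm_ring_1 fps"
  assumes "fps_X * h = 0" shows "h = 0"
proof (rule fps_ext)
  fix n
  have "fps_nth (fps_X * h) (Suc n) = 0" using assms by simp
  then show "fps_nth h n = fps_nth 0 n" by simp
qed

lemma fps_X_mult_cancel:
  fixes h k :: "'r::comm_ring_1 fps"
  assumes "fps_X * h = fps_X * k" shows "h = k"
proof -
  have "fps_X * (h - k) = 0" using assms by (simp add: algebra_simps)
  then show ?thesis using fps_X_mult_eq_0 by fastforce
qed

context
  fixes dummy :: "'r::comm_ring_1"
  assumes Qalg: "\<And>n::nat. n > 0 \<Longrightarrow> \<exists>y::'r. of_nat n * y = 1"
begin

lemma rinv_nat: "n > 0 \<Longrightarrow> of_nat n * rinv (of_nat n :: 'r) = 1"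
  using Qalg[of n] rinv_eq by metis

lemma rinv_nat': "n > 0 \<Longrightarrow> rinv (of_nat n :: 'r) * of_nat n = 1"
  using rinv_nat by (simp add: mult.commute)

lemma nat_cancel: "n > 0 \<Longrightarrow> of_nat n * (x::'r) = 0 \<Longrightarrow> x = 0"
proof -
  assume n: "n > 0" and h: "of_nat n * x = 0"
  have "rinv (of_nat n :: 'r) * (of_nat n * x) = 0" using h by simp
  then show "x = 0" using rinv_nat'[OF n] by (simp add: mult.assoc[symmetric])
qed

lemma fps_deriv_zero_const:
  fixes H :: "'r fps"
  assumes "fps_deriv H = 0" shows "H = fps_const (fps_nth H 0)"
proof (rule fps_ext)
  fix n show "fps_nth H n = fps_nth (fps_const (fps_nth H 0)) n"
  proof (cases n)
    case (Suc m)
    have "of_nat (m + 1) * fps_nth H (m + 1) = 0"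
      using arg_cong[OF assms, of "\<lambda>f. fps_nth f m"] by simp
    then have "fps_nth H (m+1) = 0" using nat_cancel[of "m+1"] by simp
    then show ?thesis using Suc by simp
  qed simp
qed

definition cf :: "nat \<Rightarrow> 'r" where "cf k = rinv (of_nat (fact k))"

lemma cf_inv: "of_nat (fact k) * cf k = 1"
  unfolding cf_def by (rule rinv_nat) simp

lemma cf_Suc: "cf (Suc k) * of_nat (Suc k) = cf k"
proof -
  have "of_nat (fact k) * (cf (Suc k) * of_nat (Suc k)) = (1::'r)"
    using cf_inv[of "Suc k"] by (simp add: algebra_simps of_nat_mult)
  then have "rinv (of_nat (fact k) :: 'r) = cf (Suc k) * of_nat (Suc k)" by (rule rinv_eq)
  then show ?thesis by (simp add: cf_def)
qed

definition EN :: "'r fps \<Rightarrow> nat \<Rightarrow> 'r fps" where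
  "EN g N = (\<Sum>k\<le>N. fps_const (cf k) * g ^ k)"

lemma EN_nth:
  fixes g :: "'r fps"
  assumes g0: "fps_nth g 0 = 0" and "n \<le> N"
  shows "fps_nth (EN g N) n = fps_nth (fps_exp_R g) n"
proof -
  have "fps_nth (EN g N) n = (\<Sum>k\<le>N. cf k * fps_nth (g ^ k) n)"
    by (simp add: EN_def fps_sum_nth)
  also have "\<dots> = (\<Sum>k\<le>n. cf k * fps_nth (g ^ k) n)"
  proof (rule sum.mono_neutral_right)
    show "\<forall>i\<in>{..N} - {..n}. cf i * fps_nth (g ^ i) n = 0"
      using startsby_zero_power_prefix[OF g0] by auto
  qed (use assms in auto)
  also have "\<dots> = fps_nth (fps_exp_R g) n"
    by (simp add: fps_exp_R_def cf_def)
  finally show ?thesis .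
qed

lemma EN_deriv: fixes g :: "'r fps" shows "fps_deriv (EN g (Suc N)) = fps_deriv g * EN g N"
proof -
  have "fps_deriv (EN g (Suc N)) = (\<Sum>k\<le>Suc N. fps_const (cf k) * fps_deriv (g ^ k))"
    by (simp add: EN_def fps_deriv_sum)
  also have "\<dots> = (\<Sum>k\<le>N. fps_const (cf (Suc k)) * fps_deriv (g ^ Suc k))"
    by (subst sum.atMost_Suc_shift) simp
  also have "\<dots> = (\<Sum>k\<le>N. fps_deriv g * (fps_const (cf k) * g ^ k))"
  proof (rule sum.cong[OF refl])
    fix k
    have "fps_const (cf (Suc k)) * fps_deriv (g ^ Suc k)
        = fps_const (cf (Suc k)) * (fps_const (of_nat (Suc k)) * fps_deriv g * g ^ k)"
      by (simp only: fps_deriv_power diff_Suc_1)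
    also have "\<dots> = fps_const (cf (Suc k) * of_nat (Suc k)) * fps_deriv g * g ^ k"
      by (simp only: mult.assoc[symmetric] fps_const_mult)
    also have "\<dots> = fps_deriv g * (fps_const (cf k) * g ^ k)"
      by (simp only: cf_Suc) (simp add: mult_ac)
    finally show "fps_const (cf (Suc k)) * fps_deriv (g ^ Suc k) = fps_deriv g * (fps_const (cf k) * g ^ k)" .
  qed
  also have "\<dots> = fps_deriv g * EN g N"
    by (simp add: EN_def sum_distrib_left)
  finally show ?thesis .
qed

lemma exp_R_deriv:
  fixes g :: "'r fps"
  assumes g0: "fps_nth g 0 = 0"
  shows "fps_deriv (fps_exp_R g) = fps_deriv g * fps_exp_R g"
proof (rule fps_ext)
  fix n
  have "fps_nth (fps_deriv (fps_exp_R g)) n = of_nat (n+1) * fps_nth (fps_exp_R g) (n+1)"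
    by simp
  also have "\<dots> = of_nat (n+1) * fps_nth (EN g (Suc n)) (n+1)"
    using EN_nth[OF g0, of "n+1" "Suc n"] by simp
  also have "\<dots> = fps_nth (fps_deriv (EN g (Suc n))) n" by simp
  also have "\<dots> = fps_nth (fps_deriv g * EN g n) n" by (simp add: EN_deriv)
  also have "\<dots> = (\<Sum>i=0..n. fps_nth (fps_deriv g) i * fps_nth (EN g n) (n - i))"
    by (simp add: fps_mult_nth)
  also have "\<dots> = (\<Sum>i=0..n. fps_nth (fps_deriv g) i * fps_nth (fps_exp_R g) (n - i))"
    by (rule sum.cong[OF refl]) (simp add: EN_nth[OF g0])
  also have "\<dots> = fps_nth (fps_deriv g * fps_exp_R g) n"
    by (simp add: fps_mult_nth)
  finally show "fps_nth (fps_deriv (fps_exp_R g)) n = fps_nth (fps_deriv g * fps_exp_R g) n" .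
qed

lemma exp_R_0:
  fixes g :: "'r fps"
  assumes g0: "fps_nth g 0 = 0"
  shows "fps_nth (fps_exp_R g) 0 = 1"
proof -
  have "fps_nth (fps_exp_R g) 0 = cf 0 * fps_nth (g^0) 0"
    by (simp add: fps_exp_R_def cf_def)
  also have "\<dots> = 1" using cf_inv[of 0] by simp
  finally show ?thesis .
qed

lemma exp_R_inverse:
  fixes g Q :: "'r fps"
  assumes g0: "fps_nth g 0 = 0" and Q0: "fps_nth Q 0 = 1"
    and QD: "fps_deriv Q + Q * fps_deriv g = 0"
  shows "finv (fps_exp_R g) = Q"
proof -
  let ?E = "fps_exp_R g"
  have "fps_deriv (?E * Q) = ?E * (fps_deriv Q + Q * fps_deriv g)"
    by (simp add: exp_R_deriv[OF g0] algebra_simps)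
  also have "\<dots> = 0" using QD by simp
  finally have "?E * Q = fps_const (fps_nth (?E * Q) 0)" by (rule fps_deriv_zero_const)
  also have "fps_nth (?E * Q) 0 = 1" by (simp add: exp_R_0[OF g0] Q0)
  finally show ?thesis by (intro finv_eq) simp
qed

end

section \<open>Matrices as functions\<close>

definition mm :: "('a \<Rightarrow> 'b::finite \<Rightarrow> 'r::comm_semiring_1) \<Rightarrow> ('b \<Rightarrow> 'c \<Rightarrow> 'r) \<Rightarrow> 'a \<Rightarrow> 'c \<Rightarrow> 'r" where
  "mm X Y = (\<lambda>i k. \<Sum>j\<in>UNIV. X i j * Y j k)"

definition I1 :: "'a \<Rightarrow> 'a \<Rightarrow> 'r::{zero,one}" where
  "I1 = (\<lambda>i j. if i = j then 1 else 0)"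

definition sm :: "'r::times \<Rightarrow> ('a \<Rightarrow> 'b \<Rightarrow> 'r) \<Rightarrow> 'a \<Rightarrow> 'b \<Rightarrow> 'r" where
  "sm c X = (\<lambda>i j. c * X i j)"

definition tr :: "('a::finite \<Rightarrow> 'a \<Rightarrow> 'r::comm_monoid_add) \<Rightarrow> 'r" where
  "tr X = (\<Sum>i\<in>UNIV. X i i)"

definition md :: "('a \<Rightarrow> 'b \<Rightarrow> 'r::comm_ring_1 fps) \<Rightarrow> 'a \<Rightarrow> 'b \<Rightarrow> 'r fps" where
  "md X = (\<lambda>i j. fps_deriv (X i j))"

lemma mm_apply: "mm X Y i k = (\<Sum>j\<in>UNIV. X i j * Y j k)"
  by (simp add: mm_def)

lemma mm_assoc: "mm (mm X Y) Z = mm X (mm Y Z)"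
  unfolding mm_def
  by (auto simp: sum_distrib_left sum_distrib_right mult.assoc intro!: ext
      intro: sum.swap)

lemma mm_add_l: "mm (X + Y) Z = mm X Z + mm Y Z"
  by (auto simp: mm_def algebra_simps sum.distrib intro!: ext)

lemma mm_add_r: "mm X (Y + Z) = mm X Y + mm X Z"
  by (auto simp: mm_def algebra_simps sum.distrib intro!: ext)

lemma mm_diff_l: "mm (X - Y) (Z::_\<Rightarrow>_\<Rightarrow>'r::comm_ring_1) = mm X Z - mm Y Z"
  by (auto simp: mm_def algebra_simps sum_subtractf intro!: ext)

lemma mm_diff_r: "mm (X::_\<Rightarrow>_\<Rightarrow>'r::comm_ring_1) (Y - Z) = mm X Y - mm X Z"
  by (auto simp: mm_def algebra_simps sum_subtractf intro!: ext)

lemma mm_sm_l: "mm (sm c X) (Y::_\<Rightarrow>_\<Rightarrow>'r::comm_semiring_1) = sm c (mm X Y)"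
  by (auto simp: mm_def sm_def sum_distrib_left mult.assoc intro!: ext)

lemma mm_sm_r: "mm X (sm c (Y::_\<Rightarrow>_\<Rightarrow>'r::comm_semiring_1)) = sm c (mm X Y)"
  by (auto simp: mm_def sm_def sum_distrib_left mult_ac intro!: ext)

lemma mm_I1_l: "mm I1 (X::_\<Rightarrow>_\<Rightarrow>'r::comm_semiring_1) = X"
  by (auto simp: mm_def I1_def if_distrib if_distribR cong: if_cong intro!: ext)

lemma mm_I1_r: "mm (X::_\<Rightarrow>_\<Rightarrow>'r::comm_semiring_1) I1 = X"
  by (auto simp: mm_def I1_def if_distrib if_distribR cong: if_cong intro!: ext)

lemma mm_0_l: "mm 0 (X::_\<Rightarrow>_\<Rightarrow>'r::comm_semiring_1) = 0"
  by (auto simp: mm_def intro!: ext)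

lemma mm_0_r: "mm (X::_\<Rightarrow>_\<Rightarrow>'r::comm_semiring_1) 0 = 0"
  by (auto simp: mm_def intro!: ext)

lemma sm_add: "sm c (X + Y) = sm c X + sm (c::'r::comm_semiring_1) Y"
  by (auto simp: sm_def algebra_simps intro!: ext)

lemma sm_diff: "sm c (X - Y) = sm c X - sm (c::'r::comm_ring_1) Y"
  by (auto simp: sm_def algebra_simps intro!: ext)

lemma sm_sm: "sm c (sm d X) = sm (c * d) (X::_\<Rightarrow>_\<Rightarrow>'r::comm_semiring_1)"
  by (auto simp: sm_def mult.assoc intro!: ext)

lemma sm_1: "sm 1 (X::_\<Rightarrow>_\<Rightarrow>'r::comm_semiring_1) = X"
  by (auto simp: sm_def intro!: ext)

lemma sm_0: "sm c (0::_\<Rightarrow>_\<Rightarrow>'r::comm_semiring_1) = 0"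
  by (auto simp: sm_def intro!: ext)

lemma sm_uminus: "sm c (- X) = - sm c (X::_\<Rightarrow>_\<Rightarrow>'r::comm_ring_1)"
  by (auto simp: sm_def intro!: ext)

lemma mm_uminus_l: "mm (- X) (Y::_\<Rightarrow>_\<Rightarrow>'r::comm_ring_1) = - mm X Y"
  by (auto simp: mm_def sum_negf intro!: ext)

lemma mm_uminus_r: "mm X (- Y::_\<Rightarrow>_\<Rightarrow>'r::comm_ring_1) = - mm X Y"
  by (auto simp: mm_def sum_negf intro!: ext)

lemma tr_add: "tr (X + Y) = tr X + tr Y"
  by (simp add: tr_def sum.distrib)

lemma tr_diff: "tr (X - Y) = tr X - tr (Y::_\<Rightarrow>_\<Rightarrow>'r::comm_ring_1)"
  by (simp add: tr_def sum_subtractf)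

lemma tr_uminus: "tr (- Y) = - tr (Y::_\<Rightarrow>_\<Rightarrow>'r::comm_ring_1)"
  by (simp add: tr_def sum_negf)

lemma tr_sm: "tr (sm c X) = c * tr (X::_\<Rightarrow>_\<Rightarrow>'r::comm_semiring_1)"
  by (simp add: tr_def sm_def sum_distrib_left)

lemma tr_comm: "tr (mm X Y) = tr (mm Y (X::_\<Rightarrow>_\<Rightarrow>'r::comm_semiring_1))"
  unfolding tr_def mm_def by (subst sum.swap) (simp add: mult.commute)

lemma md_add: "md (X + Y) = md X + md Y"
  by (auto simp: md_def intro!: ext)

lemma md_diff: "md (X - Y) = md X - md Y"
  by (auto simp: md_def intro!: ext)

lemma md_uminus: "md (- X) = - md X"
  by (auto simp: md_def intro!: ext)

lemma md_mm: "md (mm X Y) = mm (md X) Y + mm X (md Y)"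
  by (auto simp: md_def mm_def fps_deriv_sum sum.distrib[symmetric] algebra_simps intro!: ext)

lemma md_sm: "md (sm c X) = sm (fps_deriv c) X + sm c (md X)"
  by (auto simp: md_def sm_def algebra_simps intro!: ext)

lemma md_I1: "md I1 = 0"
  by (auto simp: md_def I1_def intro!: ext)

section \<open>Derivative of a product and Jacobi's formula\<close>

lemma fps_deriv_prod:
  fixes f :: "'a \<Rightarrow> 'r::comm_ring_1 fps"
  assumes "finite S"
  shows "fps_deriv (prod f S) = (\<Sum>j\<in>S. fps_deriv (f j) * prod f (S - {j}))"
  using assms
proof (induction S rule: finite_induct)
  case empty
  then show ?case by simp
next
  case (insert x F)
  have "fps_deriv (prod f (insert x F)) = f x * fps_deriv (prod f F) + fps_deriv (f x) * prod f F"
    using insert by simp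
  also have "f x * fps_deriv (prod f F) = (\<Sum>j\<in>F. fps_deriv (f j) * prod f (insert x F - {j}))"
  proof -
    have "f x * fps_deriv (prod f F) = (\<Sum>j\<in>F. fps_deriv (f j) * (f x * prod f (F - {j})))"
      using insert by (simp add: sum_distrib_left mult_ac)
    also have "\<dots> = (\<Sum>j\<in>F. fps_deriv (f j) * prod f (insert x F - {j}))"
    proof (rule sum.cong[OF refl])
      fix j assume j: "j \<in> F"
      then have "insert x F - {j} = insert x (F - {j})" using insert by auto
      then show "fps_deriv (f j) * (f x * prod f (F - {j})) = fps_deriv (f j) * prod f (insert x F - {j})"
        using insert by simp
    qed
    finally show ?thesis .
  qed
  also have "fps_deriv (f x) * prod f F = fps_deriv (f x) * prod f (insert x F - {x})"
    using insert by simp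
  finally show ?case using insert by (simp add: add.commute)
qed

lemma det_deriv_rows:
  fixes Y :: "'r::comm_ring_1 fps ^'n::finite^'n"
  shows "fps_deriv (det Y) =
    (\<Sum>j\<in>UNIV. det (\<chi> i. if i = j then (\<chi> k. fps_deriv (Y$j$k)) else Y$i))"
proof -
  let ?P = "{p. p permutes (UNIV::'n set)}"
  have "fps_deriv (det Y) = (\<Sum>p\<in>?P. of_int (sign p) * fps_deriv (\<Prod>i\<in>UNIV. Y$i$p i))"
    unfolding det_def by (simp add: fps_deriv_sum)
  also have "\<dots> = (\<Sum>p\<in>?P. \<Sum>j\<in>UNIV. of_int (sign p) *
       (\<Prod>i\<in>UNIV. (\<chi> i. if i = j then (\<chi> k. fps_deriv (Y$j$k)) else Y$i)$i$p i))"
  proof (rule sum.cong[OF refl])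
    fix p
    have "fps_deriv (\<Prod>i\<in>UNIV. Y$i$p i) = (\<Sum>j\<in>UNIV. fps_deriv (Y$j$p j) * (\<Prod>i\<in>UNIV-{j}. Y$i$p i))"
      by (simp add: fps_deriv_prod)
    also have "\<dots> = (\<Sum>j\<in>UNIV. (\<Prod>i\<in>UNIV. (\<chi> i. if i = j then (\<chi> k. fps_deriv (Y$j$k)) else Y$i)$i$p i))"
    proof (rule sum.cong[OF refl])
      fix j
      have "(\<Prod>i\<in>UNIV. (\<chi> i. if i = j then (\<chi> k. fps_deriv (Y$j$k)) else Y$i)$i$p i)
          = (\<chi> i. if i = j then (\<chi> k. fps_deriv (Y$j$k)) else Y$i)$j$p j *
            (\<Prod>i\<in>UNIV-{j}. (\<chi> i. if i = j then (\<chi> k. fps_deriv (Y$j$k)) else Y$i)$i$p i)"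
        by (rule prod.remove) simp_all
      also have "(\<Prod>i\<in>UNIV-{j}. (\<chi> i. if i = j then (\<chi> k. fps_deriv (Y$j$k)) else Y$i)$i$p i) = (\<Prod>i\<in>UNIV-{j}. Y$i$p i)"
        by (rule prod.cong) auto
      also have "(\<chi> i. if i = j then (\<chi> k. fps_deriv (Y$j$k)) else Y$i)$j$p j = fps_deriv (Y$j$p j)"
        by simp
      finally show "fps_deriv (Y$j$p j) * (\<Prod>i\<in>UNIV-{j}. Y$i$p i) =
          (\<Prod>i\<in>UNIV. (\<chi> i. if i = j then (\<chi> k. fps_deriv (Y$j$k)) else Y$i)$i$p i)" by simp
    qed
    finally show "of_int (sign p) * fps_deriv (\<Prod>i\<in>UNIV. Y$i$p i) =
       (\<Sum>j\<in>UNIV. of_int (sign p) *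
       (\<Prod>i\<in>UNIV. (\<chi> i. if i = j then (\<chi> k. fps_deriv (Y$j$k)) else Y$i)$i$p i))"
      by (simp add: sum_distrib_left)
  qed
  also have "\<dots> = (\<Sum>j\<in>UNIV. det (\<chi> i. if i = j then (\<chi> k. fps_deriv (Y$j$k)) else Y$i))"
    unfolding det_def by (rule sum.swap)
  finally show ?thesis .
qed

lemma det_row_combination:
  fixes Y :: "'r::comm_ring_1 ^'n::finite^'n" and c :: "'n \<Rightarrow> 'r"
  shows "det (\<chi> i. if i = j then (\<Sum>m\<in>UNIV. c m *s Y$m) else Y$i) = c j * det Y"
proof -
  have "det (\<chi> i. if i = j then (\<Sum>m\<in>UNIV. c m *s Y$m) else Y$i) =
      (\<Sum>m\<in>UNIV. det (\<chi> i. if i = j then c m *s Y$m else Y$i))"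
    by (rule det_linear_row_sum) simp
  also have "\<dots> = (\<Sum>m\<in>UNIV. c m * det (\<chi> i. if i = j then Y$m else Y$i))"
    by (rule sum.cong[OF refl]) (rule det_row_mul)
  also have "\<dots> = c j * det (\<chi> i. if i = j then Y$j else Y$i) +
      (\<Sum>m\<in>UNIV-{j}. c m * det (\<chi> i. if i = j then Y$m else Y$i))"
    by (rule sum.remove) simp_all
  also have "(\<Sum>m\<in>UNIV-{j}. c m * det (\<chi> i. if i = j then Y$m else Y$i)) = 0"
  proof (rule sum.neutral, rule ballI)
    fix m assume m: "m \<in> UNIV - {j}"
    have "det (\<chi> i. if i = j then Y$m else Y$i) = 0"
      by (rule det_identical_rows[of j m]) (use m in \<open>auto simp: row_def vec_eq_iff\<close>)
    then show "c m * det (\<chi> i. if i = j then Y$m else Y$i) = 0" by simp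
  qed
  also have "(\<chi> i. if i = j then Y$j else Y$i) = Y" by (simp add: vec_eq_iff)
  finally show ?thesis by simp
qed

lemma jacobi_fun:
  fixes Y Z :: "'n::finite \<Rightarrow> 'n \<Rightarrow> 'r::comm_ring_1 fps"
  assumes ZY: "mm Z Y = I1"
  shows "fps_deriv (det (\<chi> i j. Y i j)) = det (\<chi> i j. Y i j) * tr (mm (md Y) Z)"
proof -
  let ?Y = "(\<chi> i j. Y i j) :: 'r fps ^'n^'n"
  let ?D = "det ?Y"
  define c where "c j m = (\<Sum>l\<in>UNIV. fps_deriv (Y j l) * Z l m)" for j m
  have row: "(\<chi> k. fps_deriv (?Y$j$k)) = (\<Sum>m\<in>UNIV. c j m *s ?Y$m)" for j
  proof (simp add: vec_eq_iff sum_component, intro allI)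
    fix k
    have "(\<Sum>m\<in>UNIV. c j m * Y m k) = (\<Sum>l\<in>UNIV. fps_deriv (Y j l) * (\<Sum>m\<in>UNIV. Z l m * Y m k))"
    proof -
      have "(\<Sum>m\<in>UNIV. c j m * Y m k) = (\<Sum>m\<in>UNIV. \<Sum>l\<in>UNIV. fps_deriv (Y j l) * (Z l m * Y m k))"
        unfolding c_def by (simp add: sum_distrib_right mult.assoc)
      also have "\<dots> = (\<Sum>l\<in>UNIV. \<Sum>m\<in>UNIV. fps_deriv (Y j l) * (Z l m * Y m k))"
        by (rule sum.swap)
      also have "\<dots> = (\<Sum>l\<in>UNIV. fps_deriv (Y j l) * (\<Sum>m\<in>UNIV. Z l m * Y m k))"
        by (simp add: sum_distrib_left)
      finally show ?thesis .
    qed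
    also have "\<dots> = (\<Sum>l\<in>UNIV. fps_deriv (Y j l) * I1 l k)"
      using ZY by (simp add: mm_def fun_eq_iff)
    also have "\<dots> = fps_deriv (Y j k)"
      by (simp add: I1_def if_distrib cong: if_cong)
    finally show "fps_deriv (Y j k) = (\<Sum>m\<in>UNIV. c j m * Y m k)" by simp
  qed
  have "fps_deriv ?D = (\<Sum>j\<in>UNIV. det (\<chi> i. if i = j then (\<chi> k. fps_deriv (?Y$j$k)) else ?Y$i))"
    by (rule det_deriv_rows)
  also have "\<dots> = (\<Sum>j\<in>UNIV. c j j * ?D)"
    by (rule sum.cong[OF refl]) (simp only: row det_row_combination)
  also have "\<dots> = ?D * tr (mm (md Y) Z)"
    by (simp add: tr_def mm_def md_def c_def sum_distrib_left mult.commute)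
  finally show ?thesis .
qed

section \<open>Closed path sums\<close>

fun mpow :: "('a::finite \<Rightarrow> 'a \<Rightarrow> 'r::comm_semiring_1) \<Rightarrow> nat \<Rightarrow> 'a \<Rightarrow> 'a \<Rightarrow> 'r" where
  "mpow F 0 = I1"
| "mpow F (Suc n) = mm (mpow F n) F"

lemma sum_PiE_insert_split:
  fixes h :: "(nat \<Rightarrow> 'a::finite) \<Rightarrow> 'r::comm_monoid_add"
  assumes fin: "finite I" and i: "i \<notin> I"
  shows "(\<Sum>s\<in>PiE (insert i I) (\<lambda>_. UNIV). h s) =
         (\<Sum>v\<in>UNIV. \<Sum>g\<in>PiE I (\<lambda>_. UNIV). h (g(i := v)))"
proof -
  have inj: "inj_on (\<lambda>(y, g). g(i := y)) (UNIV \<times> PiE I (\<lambda>_. UNIV::'a set))"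
  proof (rule inj_onI, clarify)
    fix y g y' g'
    assume g: "g \<in> PiE I (\<lambda>_. UNIV::'a set)" and g': "g' \<in> PiE I (\<lambda>_. UNIV::'a set)"
      and eq: "g(i := y) = g'(i := y')"
    have "y = y'" using fun_cong[OF eq, of i] by simp
    moreover have "g = g'"
    proof
      fix j show "g j = g' j"
      proof (cases "j = i")
        case True
        then show ?thesis using g g' i by (simp add: PiE_def extensional_def)
      next
        case False
        then show ?thesis using fun_cong[OF eq, of j] by simp
      qed
    qed
    ultimately show "y = y' \<and> g = g'" by simp
  qed
  have "(\<Sum>s\<in>PiE (insert i I) (\<lambda>_. UNIV). h s) =
        (\<Sum>s\<in>(\<lambda>(y, g). g(i := y)) ` (UNIV \<times> PiE I (\<lambda>_. UNIV)). h s)"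
    by (simp add: PiE_insert_eq)
  also have "\<dots> = (\<Sum>x\<in>UNIV \<times> PiE I (\<lambda>_. UNIV). h ((\<lambda>(y, g). g(i := y)) x))"
    by (rule sum.reindex[OF inj, unfolded comp_def])
  also have "\<dots> = (\<Sum>(v,g)\<in>UNIV \<times> PiE I (\<lambda>_. UNIV). h (g(i := v)))"
    by (rule sum.cong) auto
  also have "\<dots> = (\<Sum>v\<in>UNIV. \<Sum>g\<in>PiE I (\<lambda>_. UNIV). h (g(i := v)))"
    by (rule sum.cartesian_product[symmetric])
  finally show ?thesis .
qed

definition pe :: "'a \<Rightarrow> (nat \<Rightarrow> 'a) \<Rightarrow> 'a \<Rightarrow> nat \<Rightarrow> nat \<Rightarrow> 'a" where
  "pe x s y k i = (if i = 0 then x else if i \<le> k then s i else y)"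

lemma open_path:
  fixes F :: "'a::finite \<Rightarrow> 'a \<Rightarrow> 'r::comm_semiring_1"
  shows "(\<Sum>s\<in>PiE {Suc 0..k} (\<lambda>_. UNIV). \<Prod>i\<le>k. F (pe x s y k i) (pe x s y k (Suc i)))
         = mpow F (Suc k) x y"
proof (induction k arbitrary: y)
  case 0
  show ?case by (simp add: pe_def mm_I1_l)
next
  case (Suc k)
  have split: "{Suc 0..Suc k} = insert (Suc k) {Suc 0..k}" by auto
  have "(\<Sum>s\<in>PiE {Suc 0..Suc k} (\<lambda>_. UNIV). \<Prod>i\<le>Suc k. F (pe x s y (Suc k) i) (pe x s y (Suc k) (Suc i)))
      = (\<Sum>v\<in>UNIV. \<Sum>g\<in>PiE {Suc 0..k} (\<lambda>_. UNIV).
           \<Prod>i\<le>Suc k. F (pe x (g(Suc k := v)) y (Suc k) i) (pe x (g(Suc k := v)) y (Suc k) (Suc i)))"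
    unfolding split by (rule sum_PiE_insert_split) auto
  also have "\<dots> = (\<Sum>v\<in>UNIV. \<Sum>g\<in>PiE {Suc 0..k} (\<lambda>_. UNIV).
           (\<Prod>i\<le>k. F (pe x g v k i) (pe x g v k (Suc i))) * F v y)"
  proof (intro sum.cong refl)
    fix v g
    have "(\<Prod>i\<le>Suc k. F (pe x (g(Suc k := v)) y (Suc k) i) (pe x (g(Suc k := v)) y (Suc k) (Suc i)))
        = (\<Prod>i\<le>k. F (pe x (g(Suc k := v)) y (Suc k) i) (pe x (g(Suc k := v)) y (Suc k) (Suc i)))
          * F (pe x (g(Suc k := v)) y (Suc k) (Suc k)) (pe x (g(Suc k := v)) y (Suc k) (Suc (Suc k)))"
      by (rule prod.atMost_Suc)
    also have "(\<Prod>i\<le>k. F (pe x (g(Suc k := v)) y (Suc k) i) (pe x (g(Suc k := v)) y (Suc k) (Suc i)))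
        = (\<Prod>i\<le>k. F (pe x g v k i) (pe x g v k (Suc i)))"
      by (rule prod.cong) (auto simp: pe_def)
    also have "F (pe x (g(Suc k := v)) y (Suc k) (Suc k)) (pe x (g(Suc k := v)) y (Suc k) (Suc (Suc k))) = F v y"
      by (simp add: pe_def)
    finally show "(\<Prod>i\<le>Suc k. F (pe x (g(Suc k := v)) y (Suc k) i) (pe x (g(Suc k := v)) y (Suc k) (Suc i)))
        = (\<Prod>i\<le>k. F (pe x g v k i) (pe x g v k (Suc i))) * F v y" .
  qed
  also have "\<dots> = (\<Sum>v\<in>UNIV. (\<Sum>g\<in>PiE {Suc 0..k} (\<lambda>_. UNIV).
           (\<Prod>i\<le>k. F (pe x g v k i) (pe x g v k (Suc i)))) * F v y)"
    by (simp only: sum_distrib_right)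
  also have "\<dots> = (\<Sum>v\<in>UNIV. mpow F (Suc k) x v * F v y)"
    by (simp only: Suc.IH)
  also have "\<dots> = mpow F (Suc (Suc k)) x y"
    by (simp add: mm_def)
  finally show ?case .
qed

lemma mod_Suc_lt: "(i::nat) < m \<Longrightarrow> (i + 1) mod m = (if i + 1 = m then 0 else i + 1)"
proof (cases "i + 1 = m")
  case False
  assume "i < m" then show ?thesis using False by simp
qed simp

lemma mod_Suc_lt': "(i::nat) < m \<Longrightarrow> Suc i mod m = (if Suc i = m then 0 else Suc i)"
proof (cases "Suc i = m")
  case False
  assume "i < m" then show ?thesis using False by simp
qed simp

lemma closed_path:
  fixes F :: "'a::finite \<Rightarrow> 'a \<Rightarrow> 'r::comm_semiring_1" and m :: nat
  assumes m: "m > 0"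
  shows "(\<Sum>s\<in>PiE {..<m} (\<lambda>_. UNIV). \<Prod>i<m. F (s i) (s ((i + 1) mod m))) = tr (mpow F m)"
proof -
  obtain k where k: "m = Suc k" using m by (cases m) auto
  have split: "{..<Suc k} = insert 0 {Suc 0..k}" by auto
  have "(\<Sum>s\<in>PiE {..<m} (\<lambda>_. UNIV). \<Prod>i<m. F (s i) (s ((i + 1) mod m)))
      = (\<Sum>v\<in>UNIV. \<Sum>g\<in>PiE {Suc 0..k} (\<lambda>_. UNIV).
           \<Prod>i<Suc k. F ((g(0 := v)) i) ((g(0 := v)) ((i + 1) mod Suc k)))"
    unfolding k split by (rule sum_PiE_insert_split) auto
  also have "\<dots> = (\<Sum>v\<in>UNIV. \<Sum>g\<in>PiE {Suc 0..k} (\<lambda>_. UNIV).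
           \<Prod>i\<le>k. F (pe v g v k i) (pe v g v k (Suc i)))"
  proof (intro sum.cong refl)
    fix v g
    show "(\<Prod>i<Suc k. F ((g(0 := v)) i) ((g(0 := v)) ((i + 1) mod Suc k)))
        = (\<Prod>i\<le>k. F (pe v g v k i) (pe v g v k (Suc i)))"
      unfolding lessThan_Suc_atMost
      by (rule prod.cong) (auto simp: pe_def mod_Suc_lt mod_Suc_lt')
  qed
  also have "\<dots> = (\<Sum>v\<in>UNIV. mpow F (Suc k) v v)"
    by (simp only: open_path)
  finally show ?thesis by (simp add: k tr_def)
qed

lemma prod_rotate:
  fixes f :: "nat \<Rightarrow> 'r::comm_monoid_mult" and m :: nat
  assumes m: "m > 0"
  shows "(\<Prod>j<m. f j) = (\<Prod>i<m. f ((i + 1) mod m))"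
proof (rule prod.reindex_bij_witness[where j = "\<lambda>j. if j = 0 then m - 1 else j - 1"
                                     and i = "\<lambda>i. (i + 1) mod m"])
qed (use m in \<open>auto simp: mod_Suc_lt mod_Suc_lt'\<close>)

lemma closed_factor:
  fixes P :: "'e \<Rightarrow> 't::finite \<Rightarrow> 'r::comm_semiring_1" and Q :: "'t \<Rightarrow> 'e \<Rightarrow> 'r" and m :: nat
  assumes S: "finite S" and m: "m > 0"
  shows "(\<Sum>p\<in>PiE {..<m} (\<lambda>_. S). \<Prod>i<m. (\<Sum>t\<in>UNIV. P (p i) t * Q t (p ((i+1) mod m))))
       = (\<Sum>s\<in>PiE {..<m} (\<lambda>_. UNIV). \<Prod>i<m. (\<Sum>a\<in>S. Q (s i) a * P a (s ((i+1) mod m))))"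
proof -
  define \<pi> where "\<pi> j = (if j = 0 then m - 1 else j - 1)" for j
  have pis: "i < m \<Longrightarrow> \<pi> (Suc i mod m) = i" for i
    using m by (auto simp: \<pi>_def mod_Suc_lt mod_Suc_lt')
  have "(\<Sum>p\<in>PiE {..<m} (\<lambda>_. S). \<Prod>i<m. (\<Sum>t\<in>UNIV. P (p i) t * Q t (p ((i+1) mod m))))
      = (\<Sum>p\<in>PiE {..<m} (\<lambda>_. S). \<Sum>s\<in>PiE {..<m} (\<lambda>_. UNIV).
           \<Prod>i<m. P (p i) (s i) * Q (s i) (p ((i+1) mod m)))"
    by (rule sum.cong[OF refl], rule prod_sum_PiE) auto
  also have "\<dots> = (\<Sum>s\<in>PiE {..<m} (\<lambda>_. UNIV). \<Sum>p\<in>PiE {..<m} (\<lambda>_. S).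
           \<Prod>i<m. P (p i) (s i) * Q (s i) (p ((i+1) mod m)))"
    by (rule sum.swap)
  also have "\<dots> = (\<Sum>s\<in>PiE {..<m} (\<lambda>_. UNIV). \<Prod>i<m. (\<Sum>a\<in>S. Q (s i) a * P a (s ((i+1) mod m))))"
  proof (rule sum.cong[OF refl])
    fix s :: "nat \<Rightarrow> 't"
    have "(\<Sum>p\<in>PiE {..<m} (\<lambda>_. S). \<Prod>i<m. P (p i) (s i) * Q (s i) (p ((i+1) mod m)))
        = (\<Sum>p\<in>PiE {..<m} (\<lambda>_. S). \<Prod>j<m. Q (s (\<pi> j)) (p j) * P (p j) (s j))"
    proof (rule sum.cong[OF refl])
      fix p :: "nat \<Rightarrow> 'e"
      have "(\<Prod>i<m. P (p i) (s i) * Q (s i) (p ((i+1) mod m)))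
          = (\<Prod>i<m. P (p i) (s i)) * (\<Prod>i<m. Q (s i) (p ((i+1) mod m)))"
        by (rule prod.distrib)
      also have "(\<Prod>i<m. Q (s i) (p ((i+1) mod m))) = (\<Prod>i<m. Q (s (\<pi> ((i+1) mod m))) (p ((i+1) mod m)))"
        by (rule prod.cong) (auto simp: pis)
      also have "\<dots> = (\<Prod>j<m. Q (s (\<pi> j)) (p j))"
        by (rule prod_rotate[OF m, symmetric])
      finally show "(\<Prod>i<m. P (p i) (s i) * Q (s i) (p ((i+1) mod m)))
          = (\<Prod>j<m. Q (s (\<pi> j)) (p j) * P (p j) (s j))"
        by (simp add: prod.distrib mult.commute)
    qed
    also have "\<dots> = (\<Prod>j<m. \<Sum>a\<in>S. Q (s (\<pi> j)) a * P a (s j))"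
      by (rule prod_sum_PiE[symmetric]) (use S in auto)
    also have "\<dots> = (\<Prod>i<m. \<Sum>a\<in>S. Q (s (\<pi> ((i+1) mod m))) a * P a (s ((i+1) mod m)))"
      by (rule prod_rotate[OF m])
    also have "\<dots> = (\<Prod>i<m. \<Sum>a\<in>S. Q (s i) a * P a (s ((i+1) mod m)))"
      by (rule prod.cong) (auto simp: pis)
    finally show "(\<Sum>p\<in>PiE {..<m} (\<lambda>_. S). \<Prod>i<m. P (p i) (s i) * Q (s i) (p ((i+1) mod m)))
        = (\<Prod>i<m. \<Sum>a\<in>S. Q (s i) a * P a (s ((i+1) mod m)))" .
  qed
  finally show ?thesis .
qed

section \<open>Reduction of the arc sums to a matrix on pairs of vertices\<close>

definition Mr :: "'e set \<Rightarrow> ('e \<Rightarrow> 'v) \<Rightarrow> ('e \<Rightarrow> 'v) \<Rightarrow> ('e \<Rightarrow> 'r::comm_ring_1) \<Rightarrow> ('e \<Rightarrow> 'r)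
    \<Rightarrow> 'v \<times> 'v \<Rightarrow> 'v \<times> 'v \<Rightarrow> 'r" where
  "Mr A tail head \<tau> \<upsilon> p q =
     (if snd p = fst q then a_coef A tail head \<tau> (fst q) (snd q) else 0)
   - (if fst q = snd p \<and> snd q = fst p then a_coef A tail head \<upsilon> (fst q) (snd q) else 0)"

lemma thetaG_zero:
  "head a \<noteq> tail a' \<Longrightarrow> thetaG A tail head \<tau> \<upsilon> a a' = 0"
  by (simp add: thetaG_def inv_arcs_def arcs_between_def)

lemma thetaG_factor:
  fixes \<tau> \<upsilon> :: "'e \<Rightarrow> 'r::comm_ring_1" and tail head :: "'e \<Rightarrow> 'v::finite"
  assumes "a' \<in> A"
  shows "thetaG A tail head \<tau> \<upsilon> a a' =
    (\<Sum>t\<in>UNIV. (if t = (tail a, head a) then 1 else 0) *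
       (if tail a' = snd t then \<tau> a' - (if head a' = fst t then \<upsilon> a' else 0) else 0))"
proof -
  have "(\<Sum>t\<in>UNIV. (if t = (tail a, head a) then 1 else 0) *
       (if tail a' = snd t then \<tau> a' - (if head a' = fst t then \<upsilon> a' else 0) else 0))
     = (\<Sum>t\<in>UNIV. if t = (tail a, head a) then
       (if tail a' = snd t then \<tau> a' - (if head a' = fst t then \<upsilon> a' else 0) else 0) else 0)"
    by (rule sum.cong) simp_all
  also have "\<dots> = (if tail a' = head a then \<tau> a' - (if head a' = tail a then \<upsilon> a' else 0) else 0)"
    by (subst sum.delta) simp_all
  also have "\<dots> = thetaG A tail head \<tau> \<upsilon> a a'"
    using assms by (auto simp: thetaG_def inv_arcs_def arcs_between_def)
  finally show ?thesis by simp
qed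

lemma Mr_factor:
  fixes \<tau> \<upsilon> :: "'e \<Rightarrow> 'r::comm_ring_1" and tail head :: "'e \<Rightarrow> 'v::finite"
  assumes finA: "finite A"
  shows "(\<Sum>a\<in>A. (if tail a = snd x then \<tau> a - (if head a = fst x then \<upsilon> a else 0) else 0) *
            (if y = (tail a, head a) then 1 else 0)) = Mr A tail head \<tau> \<upsilon> x y"
proof -
  have "(\<Sum>a\<in>A. (if tail a = snd x then \<tau> a - (if head a = fst x then \<upsilon> a else 0) else 0) *
            (if y = (tail a, head a) then 1 else 0))
      = (\<Sum>a\<in>A. if tail a = fst y \<and> head a = snd y then
            (if fst y = snd x then \<tau> a - (if snd y = fst x then \<upsilon> a else 0) else 0) else 0)"
    by (rule sum.cong) auto
  also have "\<dots> = (\<Sum>a\<in>arcs_between A tail head (fst y) (snd y).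
            (if fst y = snd x then \<tau> a - (if snd y = fst x then \<upsilon> a else 0) else 0))"
    unfolding arcs_between_def using finA by (simp add: sum.inter_filter)
  also have "\<dots> = Mr A tail head \<tau> \<upsilon> x y"
    by (auto simp: Mr_def a_coef_def sum_subtractf)
  finally show ?thesis .
qed

lemma N_paths_Mr:
  fixes \<tau> \<upsilon> :: "'e \<Rightarrow> 'r::comm_ring_1" and tail head :: "'e \<Rightarrow> 'v::finite"
  assumes finA: "finite A" and m: "m > 0"
  shows "N_paths A tail head (thetaG A tail head \<tau> \<upsilon>) m = tr (mpow (Mr A tail head \<tau> \<upsilon>) m)"
proof -
  let ?\<theta> = "thetaG A tail head \<tau> \<upsilon>"
  define P where "P a t = (if t = (tail a, head a) then 1 else (0::'r))" for a and t :: "'v \<times> 'v"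
  define Q where "Q t a = (if tail a = snd t then \<tau> a - (if head a = fst t then \<upsilon> a else 0) else 0)"
    for t :: "'v \<times> 'v" and a
  have "N_paths A tail head ?\<theta> m = (\<Sum>p\<in>PiE {..<m} (\<lambda>_. A). \<Prod>i<m. ?\<theta> (p i) (p ((i+1) mod m)))"
    unfolding N_paths_def
  proof (rule sum.cong[OF refl])
    fix p
    show "(if \<forall>i<m. head (p i) = tail (p ((i + 1) mod m)) then \<Prod>i<m. ?\<theta> (p i) (p ((i + 1) mod m)) else 0)
        = (\<Prod>i<m. ?\<theta> (p i) (p ((i+1) mod m)))"
    proof (cases "\<forall>i<m. head (p i) = tail (p ((i + 1) mod m))")
      case False
      then obtain i where "i < m" "head (p i) \<noteq> tail (p ((i + 1) mod m))" by auto
      then have "(\<Prod>i<m. ?\<theta> (p i) (p ((i+1) mod m))) = 0"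
        by (intro prod_zero) (auto intro!: bexI[of _ i] thetaG_zero)
      then show ?thesis using False by simp
    qed simp
  qed
  also have "\<dots> = (\<Sum>p\<in>PiE {..<m} (\<lambda>_. A). \<Prod>i<m. \<Sum>t\<in>UNIV. P (p i) t * Q t (p ((i+1) mod m)))"
  proof (intro sum.cong refl prod.cong)
    fix p i assume p: "p \<in> PiE {..<m} (\<lambda>_. A)" and i: "i \<in> {..<m}"
    have "(i + 1) mod m < m" using m by simp
    then have "p ((i+1) mod m) \<in> A" using p by auto
    then show "?\<theta> (p i) (p ((i+1) mod m)) = (\<Sum>t\<in>UNIV. P (p i) t * Q t (p ((i+1) mod m)))"
      unfolding P_def Q_def by (rule thetaG_factor)
  qed
  also have "\<dots> = (\<Sum>s\<in>PiE {..<m} (\<lambda>_. UNIV). \<Prod>i<m. (\<Sum>a\<in>A. Q (s i) a * P a (s ((i+1) mod m))))"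
    by (rule closed_factor[OF finA m])
  also have "\<dots> = (\<Sum>s\<in>PiE {..<m} (\<lambda>_. UNIV). \<Prod>i<m. Mr A tail head \<tau> \<upsilon> (s i) (s ((i+1) mod m)))"
    unfolding P_def Q_def by (simp only: Mr_factor[OF finA])
  also have "\<dots> = tr (mpow (Mr A tail head \<tau> \<upsilon>) m)"
    by (rule closed_path[OF m])
  finally show ?thesis .
qed

lemma sum_delta_mult:
  fixes h :: "'a::finite \<Rightarrow> 'r::comm_semiring_1"
  shows "(\<Sum>z\<in>UNIV. (if z = a then u z else 0) * h z) = u a * h a"
proof -
  have "(\<Sum>z\<in>UNIV. (if z = a then u z else 0) * h z) = (\<Sum>z\<in>UNIV. if z = a then u z * h z else 0)"
    by (rule sum.cong) simp_all
  also have "\<dots> = u a * h a" by (subst sum.delta) simp_all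
  finally show ?thesis .
qed

lemma sum_delta_mult':
  fixes h :: "'a::finite \<Rightarrow> 'r::comm_semiring_1"
  shows "(\<Sum>z\<in>UNIV. h z * (if z = a then u z else 0)) = h a * u a"
  using sum_delta_mult[of a u h] by (simp add: mult.commute)

context
  fixes A :: "'e set" and tail head :: "'e \<Rightarrow> 'v::{finite,linorder}"
    and \<tau> \<upsilon> :: "'e \<Rightarrow> 'r::comm_ring_1"
begin

definition "al p = a_coef A tail head \<tau> (fst p) (snd p)"
definition "be p = a_coef A tail head \<upsilon> (fst p) (snd p)"
definition "FF p = f_pair A tail head \<upsilon> (fst p) (snd p)"
definition "ph p = finv (FF p)"
definition sw :: "'v \<times> 'v \<Rightarrow> 'v \<times> 'v" where "sw p = (snd p, fst p)"

lemma sw_sw[simp]: "sw (sw p) = p" by (simp add: sw_def)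
lemma sw_eq_iff: "sw p = p \<longleftrightarrow> fst p = snd p" by (cases p) (auto simp: sw_def)

lemma FF_loop: "fst p = snd p \<Longrightarrow> FF p = 1 + fps_const (be p) * fps_X"
  by (simp add: FF_def f_pair_def be_def a_coef_def)

lemma FF_pair: "fst p \<noteq> snd p \<Longrightarrow> FF p = 1 - fps_const (be p * be (sw p)) * fps_X ^ 2"
  by (simp add: FF_def f_pair_def be_def a_coef_def sw_def)

lemma FF_sw: "FF (sw p) = FF p"
proof (cases "fst p = snd p")
  case True
  then have "sw p = p" by (simp add: sw_eq_iff)
  then show ?thesis by simp
next
  case False
  then have "fst (sw p) \<noteq> snd (sw p)" by (simp add: sw_def)
  then show ?thesis using False by (simp add: FF_pair mult.commute)
qed

lemma ph_sw: "ph (sw p) = ph p" by (simp add: ph_def FF_sw)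

lemma FF_0: "fps_nth (FF p) 0 = 1"
  by (cases "fst p = snd p") (simp_all add: FF_loop FF_pair)

lemma FF_ph: "FF p * ph p = 1"
  unfolding ph_def by (rule finv_right[OF FF_0])

lemma ph_FF: "ph p * FF p = 1"
  using FF_ph by (simp add: mult.commute)

definition Nm :: "'v \<times> 'v \<Rightarrow> 'v \<times> 'v \<Rightarrow> 'r fps" where
  "Nm p q = (if q = sw p then fps_const (be q) else 0)"

definition Kc :: "'v \<times> 'v \<Rightarrow> 'v \<times> 'v \<Rightarrow> 'r fps" where
  "Kc = I1 + sm fps_X Nm"

definition Ki :: "'v \<times> 'v \<Rightarrow> 'v \<times> 'v \<Rightarrow> 'r fps" where
  "Ki p q = (if q = p then ph p else 0) + (if q = sw p \<and> q \<noteq> p then - (fps_X * fps_const (be q) * ph p) else 0)"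

definition Bm :: "'v \<times> 'v \<Rightarrow> 'v \<Rightarrow> 'r fps" where
  "Bm q w = (if snd q = w then 1 else 0)"

definition Cm :: "'v \<Rightarrow> 'v \<times> 'v \<Rightarrow> 'r fps" where
  "Cm w p = (if fst p = w then fps_const (al p) else 0)"

definition Mc :: "'v \<times> 'v \<Rightarrow> 'v \<times> 'v \<Rightarrow> 'r fps" where
  "Mc p q = fps_const (Mr A tail head \<tau> \<upsilon> p q)"

definition Lm :: "'v \<times> 'v \<Rightarrow> 'v \<times> 'v \<Rightarrow> 'r fps" where
  "Lm = I1 - sm fps_X Mc"

definition Gm :: "'v \<times> 'v \<Rightarrow> 'v \<times> 'v \<Rightarrow> 'r fps" where
  "Gm p q = Abs_fps (\<lambda>n. mpow (Mr A tail head \<tau> \<upsilon>) n p q)"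

definition Ym :: "'v \<Rightarrow> 'v \<Rightarrow> 'r fps" where
  "Ym = I1 - sm fps_X (mm Cm (mm Ki Bm))"

definition Zm :: "'v \<Rightarrow> 'v \<Rightarrow> 'r fps" where
  "Zm = I1 + sm fps_X (mm Cm (mm Gm Bm))"

lemma Kc_apply: "Kc p q = (if q = p then 1 else 0) + (if q = sw p then fps_X * fps_const (be q) else 0)"
  by (simp add: Kc_def I1_def sm_def Nm_def eq_commute)

lemma Kc_Ki: "mm Kc Ki = I1"
proof (intro ext)
  fix p q
  have "mm Kc Ki p q = (\<Sum>z\<in>UNIV. (if z = p then 1 else 0) * Ki z q) +
          (\<Sum>z\<in>UNIV. (if z = sw p then fps_X * fps_const (be z) else 0) * Ki z q)"
    by (simp add: mm_def Kc_apply algebra_simps sum.distrib eq_commute)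
  also have "\<dots> = Ki p q + fps_X * fps_const (be (sw p)) * Ki (sw p) q"
    by (simp only: sum_delta_mult) simp
  also have "\<dots> = I1 p q"
  proof (cases "fst p = snd p")
    case True
    then have sp: "sw p = p" by (simp add: sw_eq_iff)
    show ?thesis
    proof (cases "q = p")
      case True
      then show ?thesis using sp FF_loop[of p] \<open>fst p = snd p\<close> ph_FF[of p]
        by (simp add: Ki_def I1_def algebra_simps)
    next
      case False
      then show ?thesis using sp by (simp add: Ki_def I1_def)
    qed
  next
    case False
    then have sp: "sw p \<noteq> p" by (simp add: sw_eq_iff)
    have F: "FF p = 1 - fps_const (be p * be (sw p)) * fps_X ^ 2" using FF_pair False by simp
    show ?thesis
    proof (cases "q = p")
      case True
      have "Ki p q + fps_X * fps_const (be (sw p)) * Ki (sw p) q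
          = ph p * (1 - fps_const (be p * be (sw p)) * fps_X ^ 2)"
        using True sp ph_sw[of p]
        by (simp add: Ki_def algebra_simps power2_eq_square)
      also have "\<dots> = 1" using F ph_FF[of p] by simp
      finally show ?thesis using True by (simp add: I1_def)
    next
      case False
      show ?thesis
      proof (cases "q = sw p")
        case True
        then show ?thesis using sp ph_sw[of p] False
          by (simp add: Ki_def I1_def algebra_simps)
      next
        case False2: False
        have "sw p \<noteq> q" using False2 by auto
        then show ?thesis using sp False False2
          by (auto simp add: Ki_def I1_def)
      qed
    qed
  qed
  finally show "mm Kc Ki p q = I1 p q" .
qed

lemma Ki_loop: "sw p = p \<Longrightarrow> Ki p z = (if z = p then ph p else 0)"
  by (simp add: Ki_def)

lemma Ki_pair: "sw p \<noteq> p \<Longrightarrow> Ki p z = (if z = p then ph p else 0) +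
    (if z = sw p then - (fps_X * fps_const (be (sw p)) * ph p) else 0)"
  by (auto simp add: Ki_def)

lemma Ki_Kc: "mm Ki Kc = I1"
proof (intro ext)
  fix p q
  show "mm Ki Kc p q = I1 p q"
  proof (cases "sw p = p")
    case True
    have "mm Ki Kc p q = (\<Sum>z\<in>UNIV. (if z = p then ph p else 0) * Kc z q)"
      by (simp add: mm_def Ki_loop[OF True])
    also have "\<dots> = ph p * Kc p q" by (rule sum_delta_mult)
    also have "\<dots> = I1 p q"
    proof (cases "q = p")
      case True2: True
      have "fst p = snd p" using True by (simp add: sw_eq_iff)
      then show ?thesis using True True2 FF_loop[of p] ph_FF[of p]
        by (simp add: Kc_apply I1_def algebra_simps)
    next
      case False
      then show ?thesis using True by (simp add: Kc_apply I1_def)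
    qed
    finally show ?thesis .
  next
    case False
    have "mm Ki Kc p q = (\<Sum>z\<in>UNIV. (if z = p then ph p else 0) * Kc z q) +
        (\<Sum>z\<in>UNIV. (if z = sw p then - (fps_X * fps_const (be (sw p)) * ph p) else 0) * Kc z q)"
      by (simp add: mm_def Ki_pair[OF False] algebra_simps sum.distrib)
    also have "\<dots> = ph p * Kc p q + (- (fps_X * fps_const (be (sw p)) * ph p)) * Kc (sw p) q"
      by (simp only: sum_delta_mult)
    also have "\<dots> = I1 p q"
    proof -
      have np: "fst p \<noteq> snd p" using False by (simp add: sw_eq_iff)
      have F: "FF p = 1 - fps_const (be p * be (sw p)) * fps_X ^ 2" using FF_pair np by simp
      show ?thesis
      proof (cases "q = p")
        case True
        have "ph p * Kc p q + (- (fps_X * fps_const (be (sw p)) * ph p)) * Kc (sw p) q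
            = ph p * (1 - fps_const (be p * be (sw p)) * fps_X ^ 2)"
          using True False by (simp add: Kc_apply algebra_simps power2_eq_square)
        also have "\<dots> = 1" using F ph_FF[of p] by simp
        finally show ?thesis using True by (simp add: I1_def)
      next
        case False2: False
        show ?thesis
        proof (cases "q = sw p")
          case True
          then show ?thesis using False False2 by (simp add: Kc_apply I1_def algebra_simps)
        next
          case False3: False
          then show ?thesis using False False2 by (auto simp add: Kc_apply I1_def)
        qed
      qed
    qed
    finally show ?thesis .
  qed
qed

lemma fps_const_diff_split: "fps_const (c - d) = fps_const c - fps_const (d::'a::comm_ring_1)"
  by simp

lemma sw_iff: "(q = sw p) = (fst q = snd p \<and> snd q = fst p)"
  by (cases p; cases q) (auto simp: sw_def)

lemma Mr_sw: "Mr A tail head \<tau> \<upsilon> p q = (if snd p = fst q then al q else 0) - (if q = sw p then be q else 0)"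
  by (simp only: Mr_def sw_iff al_def be_def)

lemma Lm_eq: "Lm = Kc - sm fps_X (mm Bm Cm)"
proof (intro ext)
  fix p q
  have BC: "mm Bm Cm p q = (if snd p = fst q then fps_const (al q) else 0)"
  proof -
    have "mm Bm Cm p q = (\<Sum>w\<in>UNIV. (if w = snd p then 1 else 0) * Cm w q)"
      by (simp add: mm_def Bm_def eq_commute)
    also have "\<dots> = Cm (snd p) q" by (simp only: sum_delta_mult) simp
    finally show ?thesis by (simp add: Cm_def eq_commute)
  qed
  have L: "Lm p q = I1 p q - fps_X * fps_const (Mr A tail head \<tau> \<upsilon> p q)"
    by (simp add: Lm_def Mc_def sm_def)
  have R: "(Kc - sm fps_X (mm Bm Cm)) p q = I1 p q + (if q = sw p then fps_X * fps_const (be q) else 0)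
      - fps_X * (if snd p = fst q then fps_const (al q) else 0)"
    by (simp add: Kc_def BC sm_def Nm_def I1_def)
  show "Lm p q = (Kc - sm fps_X (mm Bm Cm)) p q"
    unfolding L R Mr_sw
    by (cases "snd p = fst q"; cases "q = sw p")
       (simp_all del: fps_const_sub add: fps_const_diff_split algebra_simps)
qed

lemma mpow_Suc_left: "mpow F (Suc n) = mm F (mpow F n)"
proof (induction n)
  case 0
  then show ?case by (simp add: mm_I1_l mm_I1_r)
next
  case (Suc n)
  have "mpow F (Suc (Suc n)) = mm (mpow F (Suc n)) F" by simp
  also have "\<dots> = mm (mm F (mpow F n)) F" using Suc by simp
  also have "\<dots> = mm F (mm (mpow F n) F)" by (rule mm_assoc)
  also have "\<dots> = mm F (mpow F (Suc n))" by simp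
  finally show ?case .
qed

lemma Gm_nth: "fps_nth (Gm p q) n = mpow (Mr A tail head \<tau> \<upsilon>) n p q"
  by (simp add: Gm_def)

lemma I1_fps_nth: "fps_nth ((I1 :: _ \<Rightarrow> _ \<Rightarrow> 'r fps) p q) n = (if n = 0 then I1 p q else 0)"
  by (simp add: I1_def)

lemma Lm_Gm: "mm Lm Gm = I1"
proof (intro ext fps_ext)
  fix p q n
  have e: "mm Lm Gm p q = Gm p q - fps_X * (\<Sum>z\<in>UNIV. fps_const (Mr A tail head \<tau> \<upsilon> p z) * Gm z q)"
    by (simp add: Lm_def mm_diff_l mm_I1_l mm_sm_l) (simp add: sm_def mm_def Mc_def)
  show "fps_nth (mm Lm Gm p q) n = fps_nth (I1 p q) n"
  proof (cases n)
    case 0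
    then show ?thesis by (simp add: e Gm_nth I1_fps_nth)
  next
    case (Suc k)
    have "fps_nth (mm Lm Gm p q) n = mpow (Mr A tail head \<tau> \<upsilon>) (Suc k) p q -
        (\<Sum>z\<in>UNIV. Mr A tail head \<tau> \<upsilon> p z * mpow (Mr A tail head \<tau> \<upsilon>) k z q)"
      by (simp add: e Suc Gm_nth fps_sum_nth del: mpow.simps)
    also have "\<dots> = 0" by (simp only: mpow_Suc_left) (simp add: mm_def)
    finally show ?thesis by (simp add: Suc I1_fps_nth)
  qed
qed

lemma Gm_Lm: "mm Gm Lm = I1"
proof (intro ext fps_ext)
  fix p q n
  have e: "mm Gm Lm p q = Gm p q - fps_X * (\<Sum>z\<in>UNIV. Gm p z * fps_const (Mr A tail head \<tau> \<upsilon> z q))"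
    by (simp add: Lm_def mm_diff_r mm_I1_r mm_sm_r) (simp add: sm_def mm_def Mc_def)
  show "fps_nth (mm Gm Lm p q) n = fps_nth (I1 p q) n"
  proof (cases n)
    case 0
    then show ?thesis by (simp add: e Gm_nth I1_fps_nth)
  next
    case (Suc k)
    have "fps_nth (mm Gm Lm p q) n = mpow (Mr A tail head \<tau> \<upsilon>) (Suc k) p q -
        (\<Sum>z\<in>UNIV. mpow (Mr A tail head \<tau> \<upsilon>) k p z * Mr A tail head \<tau> \<upsilon> z q)"
      by (simp add: e Suc Gm_nth fps_sum_nth mult.commute del: mpow.simps)
    also have "\<dots> = 0" by (simp add: mm_def)
    finally show ?thesis by (simp add: Suc I1_fps_nth)
  qed
qed

end

context
  fixes A :: "'e set" and tail head :: "'e \<Rightarrow> 'v::{finite,linorder}"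
    and \<tau> \<upsilon> :: "'e \<Rightarrow> 'r::comm_ring_1"
begin

abbreviation "KI \<equiv> Ki A tail head \<upsilon>"
abbreviation "KC \<equiv> Kc A tail head \<upsilon>"
abbreviation "BB \<equiv> (Bm :: _ \<Rightarrow> _ \<Rightarrow> 'r fps)"
abbreviation "CC \<equiv> Cm A tail head \<tau>"
abbreviation "GG \<equiv> Gm A tail head \<tau> \<upsilon>"
abbreviation "YY \<equiv> Ym A tail head \<tau> \<upsilon>"
abbreviation "ZZ \<equiv> Zm A tail head \<tau> \<upsilon>"
abbreviation "NN \<equiv> Nm A tail head \<upsilon>"

lemmas mm_simps = mm_add_l mm_add_r mm_diff_l mm_diff_r mm_sm_l mm_sm_r mm_I1_l mm_I1_r
  mm_assoc sm_sm sm_add sm_diff mm_uminus_l mm_uminus_r sm_uminus mm_0_l mm_0_r sm_0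

lemma G_alpha: "GG = KI + sm fps_X (mm GG (mm BB (mm CC KI)))"
proof -
  have "mm (mm GG (Lm A tail head \<tau> \<upsilon>)) KI = KI" by (simp add: Gm_Lm mm_I1_l)
  then have "GG - sm fps_X (mm GG (mm BB (mm CC KI))) = KI"
    by (simp add: Lm_eq mm_simps Kc_Ki)
  then show ?thesis by (simp add: diff_eq_eq add.commute)
qed

lemma G_beta: "GG = KI + sm fps_X (mm KI (mm BB (mm CC GG)))"
proof -
  have "mm KI (mm (Lm A tail head \<tau> \<upsilon>) GG) = KI" by (simp add: Lm_Gm mm_I1_r)
  then have "GG - sm fps_X (mm KI (mm BB (mm CC GG))) = KI"
    by (simp add: Lm_eq mm_simps Ki_Kc flip: mm_assoc)
  then show ?thesis by (simp add: diff_eq_eq add.commute)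
qed

lemma Z_Y: "mm ZZ YY = I1"
proof -
  have "mm ZZ YY = I1 + sm fps_X (mm CC (mm (GG - KI - sm fps_X (mm GG (mm BB (mm CC KI)))) BB))"
    by (simp add: Zm_def Ym_def mm_simps algebra_simps)
  also have "GG - KI - sm fps_X (mm GG (mm BB (mm CC KI))) = 0"
    using G_alpha by (simp add: algebra_simps)
  finally show ?thesis by (simp only: mm_0_l mm_0_r sm_0 add_0_right)
qed

lemma md_N: "md NN = 0"
  by (auto simp: md_def Nm_def intro!: ext)

lemma md_B: "md BB = 0"
  by (auto simp: md_def Bm_def intro!: ext)

lemma md_C: "md CC = 0"
  by (auto simp: md_def Cm_def intro!: ext)

lemma md_K: "md KC = NN"
  by (simp add: Kc_def md_add md_sm md_I1 md_N sm_1 sm_0)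

lemma X_md_Ki: "sm fps_X (md KI) = mm KI KI - KI"
proof -
  have "md (mm KC KI) = 0" by (simp add: Kc_Ki md_I1)
  then have "mm NN KI + mm KC (md KI) = 0" by (simp add: md_mm md_K)
  then have "mm KI (mm NN KI + mm KC (md KI)) = 0" by (simp add: mm_0_r)
  then have "mm KI (mm NN KI) + md KI = 0"
    by (simp add: mm_add_r flip: mm_assoc add: Ki_Kc mm_I1_l)
  then have e: "md KI = - mm KI (mm NN KI)" by (simp add: eq_neg_iff_add_eq_0 add.commute)
  have "sm fps_X NN = KC - I1" by (simp add: Kc_def)
  have "sm fps_X (md KI) = - mm KI (mm (sm fps_X NN) KI)"
    by (simp add: e mm_simps)
  also have "\<dots> = - mm KI (mm (KC - I1) KI)" by (simp add: Kc_def)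
  also have "\<dots> = mm KI KI - KI" by (simp add: mm_diff_l mm_diff_r Kc_Ki mm_I1_l mm_I1_r)
  finally show ?thesis .
qed

lemma X_md_Y: "sm fps_X (md YY) = - sm fps_X (mm CC (mm KI (mm KI BB)))"
proof -
  have "md YY = - (mm CC (mm KI BB) + sm fps_X (mm CC (mm (md KI) BB)))"
    by (simp add: Ym_def md_diff md_I1 md_sm md_mm md_B md_C sm_1 mm_0_l mm_0_r)
  then have "sm fps_X (md YY) = - (sm fps_X (mm CC (mm KI BB)) + sm fps_X (mm CC (mm (sm fps_X (md KI)) BB)))"
    by (simp add: mm_simps)
  also have "\<dots> = - sm fps_X (mm CC (mm KI (mm KI BB)))"
    by (simp add: X_md_Ki mm_simps)
  finally show ?thesis .
qed

lemma tr_G: "tr GG = tr KI + fps_X * tr (mm ZZ (mm CC (mm KI (mm KI BB))))"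
proof -
  have t1: "tr (mm KI (mm BB (mm CC KI))) = tr (mm CC (mm KI (mm KI BB)))"
    using tr_comm[of "mm KI BB" "mm CC KI"] by (simp add: mm_assoc)
  have t2: "tr (mm KI (mm BB (mm CC (mm GG (mm BB (mm CC KI)))))) =
            tr (mm CC (mm GG (mm BB (mm CC (mm KI (mm KI BB))))))"
    using tr_comm[of "mm KI BB" "mm CC (mm GG (mm BB (mm CC KI)))"] by (simp add: mm_assoc)
  have "tr GG = tr (KI + sm fps_X (mm KI (mm BB (mm CC GG))))"
    using arg_cong[OF G_beta, of tr] .
  also have "\<dots> = tr KI + fps_X * tr (mm KI (mm BB (mm CC GG)))"
    by (simp add: tr_add tr_sm)
  also have "mm KI (mm BB (mm CC GG)) = mm KI (mm BB (mm CC KI)) +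
       sm fps_X (mm KI (mm BB (mm CC (mm GG (mm BB (mm CC KI))))))"
    using arg_cong[OF G_alpha, of "\<lambda>G. mm KI (mm BB (mm CC G))"] by (simp add: mm_add_r mm_sm_r)
  also have "tr KI + fps_X * tr (mm KI (mm BB (mm CC KI)) +
       sm fps_X (mm KI (mm BB (mm CC (mm GG (mm BB (mm CC KI))))))) =
       tr KI + fps_X * (tr (mm CC (mm KI (mm KI BB))) +
         fps_X * tr (mm CC (mm GG (mm BB (mm CC (mm KI (mm KI BB)))))))"
    by (simp add: tr_add tr_sm t1 t2)
  also have "\<dots> = tr KI + fps_X * tr (mm ZZ (mm CC (mm KI (mm KI BB))))"
    by (simp add: Zm_def mm_add_l mm_I1_l mm_sm_l mm_assoc tr_add tr_sm)
  finally show ?thesis .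
qed

lemma X_tr_Y: "fps_X * tr (mm (md YY) ZZ) = tr KI - tr GG"
proof -
  have "fps_X * tr (mm (md YY) ZZ) = tr (mm (sm fps_X (md YY)) ZZ)"
    by (simp add: mm_sm_l tr_sm)
  also have "\<dots> = - (fps_X * tr (mm (mm CC (mm KI (mm KI BB))) ZZ))"
    by (simp add: X_md_Y mm_uminus_l tr_uminus mm_sm_l tr_sm)
  also have "tr (mm (mm CC (mm KI (mm KI BB))) ZZ) = tr (mm ZZ (mm CC (mm KI (mm KI BB))))"
    by (rule tr_comm)
  also have "- (fps_X * tr (mm ZZ (mm CC (mm KI (mm KI BB))))) = tr KI - tr GG"
    using tr_G by simp
  finally show ?thesis .
qed

end

lemma sum_pairs:
  fixes g :: "'a::finite \<times> 'b::finite \<Rightarrow> 'r::comm_monoid_add"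
  shows "(\<Sum>p\<in>UNIV. g p) = (\<Sum>u\<in>UNIV. \<Sum>v\<in>UNIV. g (u, v))"
  by (subst UNIV_Times_UNIV[symmetric]) (rule sum.cartesian_product')

lemma X_deriv_prod:
  fixes F ph :: "'a \<Rightarrow> 'r::comm_ring_1 fps"
  assumes S: "finite S" and inv: "\<And>p. p \<in> S \<Longrightarrow> F p * ph p = 1"
  shows "fps_X * fps_deriv (prod F S) = prod F S * (\<Sum>p\<in>S. fps_X * fps_deriv (F p) * ph p)"
proof -
  have "fps_deriv (prod F S) = (\<Sum>j\<in>S. fps_deriv (F j) * prod F (S - {j}))"
    by (rule fps_deriv_prod[OF S])
  also have "\<dots> = (\<Sum>j\<in>S. fps_deriv (F j) * ph j * prod F S)"
  proof (rule sum.cong[OF refl])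
    fix j assume j: "j \<in> S"
    have "prod F S = F j * prod F (S - {j})" by (rule prod.remove[OF S j])
    then have "ph j * prod F S = prod F (S - {j})" using inv[OF j]
      by (simp add: mult.assoc[symmetric] mult.commute[of "ph j"])
    then show "fps_deriv (F j) * prod F (S - {j}) = fps_deriv (F j) * ph j * prod F S"
      by (simp add: mult.assoc)
  qed
  finally show ?thesis by (simp add: sum_distrib_left sum_distrib_right mult_ac)
qed

lemma fps_nth_prod_0: "fps_nth (prod f S) 0 = (\<Prod>i\<in>S. fps_nth (f i) 0)"
  for f :: "'a \<Rightarrow> 'r::comm_ring_1 fps"
  by (induction S rule: infinite_finite_induct) auto

lemma det_nth_0:
  fixes M :: "'r::comm_ring_1 fps ^'n::finite^'n"
  shows "fps_nth (det M) 0 = det (\<chi> i j. fps_nth (M$i$j) 0)"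
proof -
  have "fps_nth (det M) 0 = (\<Sum>p\<in>{p. p permutes (UNIV::'n set)}.
          fps_nth (of_int (sign p) * (\<Prod>i\<in>UNIV. M$i$p i)) 0)"
    unfolding det_def by (simp add: fps_sum_nth)
  also have "\<dots> = (\<Sum>p\<in>{p. p permutes (UNIV::'n set)}. of_int (sign p) * (\<Prod>i\<in>UNIV. fps_nth (M$i$p i) 0))"
  proof (rule sum.cong[OF refl])
    fix p :: "'n \<Rightarrow> 'n"
    have "(of_int (sign p) :: 'r fps) = fps_const (of_int (sign p))" by (simp add: fps_of_int)
    then show "fps_nth (of_int (sign p) * (\<Prod>i\<in>UNIV. M$i$p i)) 0 = of_int (sign p) * (\<Prod>i\<in>UNIV. fps_nth (M$i$p i) 0)"
      by (simp add: fps_nth_prod_0)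
  qed
  also have "\<dots> = det (\<chi> i j. fps_nth (M$i$j) 0)" by (simp add: det_def)
  finally show ?thesis .
qed

context
  fixes A :: "'e set" and tail head :: "'e \<Rightarrow> 'v::{finite,linorder}"
    and \<tau> \<upsilon> :: "'e \<Rightarrow> 'r::comm_ring_1"
begin

abbreviation "PH \<equiv> ph A tail head \<upsilon>"
abbreviation "KIk \<equiv> Ki A tail head \<upsilon>"
abbreviation "FFF \<equiv> FF A tail head \<upsilon>"

lemma f_Delta_eq: "f_Delta A tail head \<upsilon> = (\<Prod>p\<in>{p. fst p \<le> snd p}. FFF p)"
proof -
  have "f_Delta A tail head \<upsilon> = (\<Prod>p\<in>Phi A tail head. FFF p)"
    unfolding f_Delta_def FF_def by (rule prod.cong) auto
  also have "\<dots> = (\<Prod>p\<in>{p. fst p \<le> snd p}. FFF p)"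
  proof (rule prod.mono_neutral_left)
    show "Phi A tail head \<subseteq> {p. fst p \<le> snd p}" by (auto simp: Phi_def)
  next
    show "\<forall>p\<in>{p. fst p \<le> snd p} - Phi A tail head. FFF p = 1"
    proof
      fix p assume p: "p \<in> {p. fst p \<le> snd p} - Phi A tail head"
      then have e: "arcs_between A tail head (fst p) (snd p) = {}" "arcs_between A tail head (snd p) (fst p) = {}"
        by (auto simp: Phi_def case_prod_beta)
      then have "be A tail head \<upsilon> p = 0" "be A tail head \<upsilon> (sw p) = 0"
        by (simp_all add: be_def a_coef_def sw_def)
      then show "FFF p = 1"
        by (cases "fst p = snd p") (simp_all add: FF_loop FF_pair)
    qed
  qed simp
  finally show ?thesis .
qed

lemma fps_deriv_X2: "fps_deriv (fps_X ^ 2 :: 'r fps) = 2 * fps_X"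
  by (simp add: fps_deriv_power numeral_fps_const)

lemma X_deriv_FF: "fps_X * fps_deriv (FFF p) * PH p = (if fst p = snd p then 1 - PH p else 2 * (1 - PH p))"
proof (cases "fst p = snd p")
  case True
  have e: "fps_X * fps_deriv (FFF p) = FFF p - 1"
    using True by (simp add: FF_loop mult.commute)
  have "fps_X * fps_deriv (FFF p) * PH p = (FFF p - 1) * PH p"
    by (simp only: e)
  also have "\<dots> = FFF p * PH p - PH p"
    by (simp add: algebra_simps)
  also have "\<dots> = 1 - PH p" by (simp add: FF_ph)
  finally show ?thesis using True by simp
next
  case False
  have e: "fps_X * fps_deriv (FFF p) = 2 * (FFF p - 1)"
    using False by (simp add: FF_pair fps_deriv_X2 algebra_simps power2_eq_square)
  have "fps_X * fps_deriv (FFF p) * PH p = 2 * (FFF p - 1) * PH p"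
    by (simp only: e)
  also have "\<dots> = 2 * (FFF p * PH p - PH p)"
    by (simp add: algebra_simps)
  also have "\<dots> = 2 * (1 - PH p)" by (simp add: FF_ph)
  finally show ?thesis using False by simp
qed

lemma tr_Ki: "tr KIk = (\<Sum>p\<in>UNIV. PH p)"
  by (simp add: tr_def Ki_def)

lemma sum_swap_pairs:
  fixes h :: "'v \<times> 'v \<Rightarrow> 'r fps"
  assumes hs: "\<And>p. h (sw p) = h p"
  shows "(\<Sum>p\<in>UNIV. if snd p < fst p then h p else 0) = (\<Sum>p\<in>UNIV. if fst p < snd p then h p else 0)"
proof -
  have hs': "h (b, a) = h (a, b)" for a b using hs[of "(a, b)"] by (simp add: sw_def)
  show ?thesis
    by (rule sum.reindex_bij_witness[where i = sw and j = sw]) (auto simp: sw_def hs')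
qed

lemma X_deriv_f: "fps_X * fps_deriv (f_Delta A tail head \<upsilon>) =
    f_Delta A tail head \<upsilon> * (of_nat CARD('v \<times> 'v) - tr KIk)"
proof -
  let ?h = "\<lambda>p. 1 - PH p"
  have "fps_X * fps_deriv (f_Delta A tail head \<upsilon>) =
      f_Delta A tail head \<upsilon> * (\<Sum>p\<in>{p. fst p \<le> snd p}. fps_X * fps_deriv (FFF p) * PH p)"
    unfolding f_Delta_eq by (rule X_deriv_prod) (simp_all add: FF_ph)
  also have "(\<Sum>p\<in>{p. fst p \<le> snd p}. fps_X * fps_deriv (FFF p) * PH p) =
      (\<Sum>p\<in>UNIV. if fst p \<le> snd p then fps_X * fps_deriv (FFF p) * PH p else 0)"
    using sum.inter_filter[of UNIV "\<lambda>p. fps_X * fps_deriv (FFF p) * PH p" "\<lambda>p. fst p \<le> snd p"]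
    by simp
  also have "\<dots> = (\<Sum>p\<in>UNIV. (if fst p = snd p then ?h p else 0) + 2 * (if fst p < snd p then ?h p else 0))"
    by (rule sum.cong[OF refl]) (auto simp: X_deriv_FF)
  also have "\<dots> = (\<Sum>p\<in>UNIV. (if fst p = snd p then ?h p else 0) + (if fst p < snd p then ?h p else 0)
                 + (if snd p < fst p then ?h p else 0))"
  proof -
    have sw: "(\<Sum>p\<in>UNIV. if snd p < fst p then ?h p else 0) = (\<Sum>p\<in>UNIV. if fst p < snd p then ?h p else 0)"
      by (rule sum_swap_pairs) (simp add: ph_sw)
    have e1: "(\<Sum>p\<in>UNIV. (if fst p = snd p then ?h p else 0) + 2 * (if fst p < snd p then ?h p else 0))
        = (\<Sum>p\<in>UNIV. (if fst p = snd p then ?h p else 0)) + 2 * (\<Sum>p\<in>UNIV. (if fst p < snd p then ?h p else 0))"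
      by (simp only: sum.distrib sum_distrib_left)
    have e2: "(\<Sum>p\<in>UNIV. (if fst p = snd p then ?h p else 0) + (if fst p < snd p then ?h p else 0)
                 + (if snd p < fst p then ?h p else 0)) =
        (\<Sum>p\<in>UNIV. (if fst p = snd p then ?h p else 0)) + (\<Sum>p\<in>UNIV. (if fst p < snd p then ?h p else 0))
          + (\<Sum>p\<in>UNIV. (if snd p < fst p then ?h p else 0))"
      by (simp only: sum.distrib)
    show ?thesis unfolding e1 e2 sw by (simp only: mult_2 add.assoc)
  qed
  also have "\<dots> = (\<Sum>p\<in>UNIV. ?h p)"
    by (rule sum.cong[OF refl]) auto
  also have "\<dots> = of_nat CARD('v \<times> 'v) - tr KIk"
    by (simp add: sum_subtractf tr_Ki)
  finally show ?thesis .
qed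

end

context
  fixes A :: "'e set" and tail head :: "'e \<Rightarrow> 'v::{finite,linorder}"
    and \<tau> \<upsilon> :: "'e \<Rightarrow> 'r::comm_ring_1"
begin

abbreviation "PHH \<equiv> ph A tail head \<upsilon>"
abbreviation "KII \<equiv> Ki A tail head \<upsilon>"
abbreviation "ALL' \<equiv> al A tail head \<tau>"
abbreviation "BEE \<equiv> be A tail head \<upsilon>"

lemma KB_apply: "mm KII Bm p w' = (if snd p = w' then PHH p else 0) -
    (if fst p = w' \<and> sw p \<noteq> p then fps_X * fps_const (BEE (sw p)) * PHH p else 0)"
proof (cases "sw p = p")
  case True
  have "mm KII Bm p w' = (\<Sum>q\<in>UNIV. (if q = p then PHH p else 0) * Bm q w')"
    by (simp add: mm_def Ki_loop[OF True])
  also have "\<dots> = PHH p * Bm p w'" by (rule sum_delta_mult)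
  finally show ?thesis using True by (simp add: Bm_def)
next
  case False
  have "mm KII Bm p w' = (\<Sum>q\<in>UNIV. (if q = p then PHH p else 0) * Bm q w') +
      (\<Sum>q\<in>UNIV. (if q = sw p then - (fps_X * fps_const (BEE (sw p)) * PHH p) else 0) * Bm q w')"
    by (simp add: mm_def Ki_pair[OF False] algebra_simps sum.distrib)
  also have "\<dots> = PHH p * Bm p w' + (- (fps_X * fps_const (BEE (sw p)) * PHH p)) * Bm (sw p) w'"
    by (simp only: sum_delta_mult)
  finally show ?thesis using False by (simp add: Bm_def sw_def)
qed

lemma CKB_apply: "mm (Cm A tail head \<tau>) (mm KII Bm) w w' =
    fps_const (ALL' (w, w')) * PHH (w, w') -
    (if w = w' then fps_X * (\<Sum>v\<in>UNIV. if v \<noteq> w then fps_const (ALL' (w, v)) * fps_const (BEE (v, w)) * PHH (w, v) else 0) else 0)"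
proof -
  have "mm (Cm A tail head \<tau>) (mm KII Bm) w w' =
      (\<Sum>u\<in>UNIV. \<Sum>v\<in>UNIV. Cm A tail head \<tau> w (u, v) * mm KII Bm (u, v) w')"
    by (simp add: mm_apply[of "Cm A tail head \<tau>"] sum_pairs)
  also have "\<dots> = (\<Sum>u\<in>UNIV. if u = w then (\<Sum>v\<in>UNIV. fps_const (ALL' (u, v)) * mm KII Bm (u, v) w') else 0)"
    by (rule sum.cong[OF refl]) (auto simp: Cm_def)
  also have "\<dots> = (\<Sum>v\<in>UNIV. fps_const (ALL' (w, v)) * mm KII Bm (w, v) w')"
    by (simp add: sum.delta)
  also have "\<dots> = (\<Sum>v\<in>UNIV. (if v = w' then fps_const (ALL' (w, v)) * PHH (w, v) else 0)) -
       (\<Sum>v\<in>UNIV. if w = w' \<and> v \<noteq> w then fps_X * (fps_const (ALL' (w, v)) * fps_const (BEE (v, w)) * PHH (w, v)) else 0)"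
  proof -
    have "fps_const (ALL' (w, v)) * mm KII Bm (w, v) w' =
       (if v = w' then fps_const (ALL' (w, v)) * PHH (w, v) else 0) -
       (if w = w' \<and> v \<noteq> w then fps_X * (fps_const (ALL' (w, v)) * fps_const (BEE (v, w)) * PHH (w, v)) else 0)"
      for v
      by (cases "v = w'"; cases "w = w' \<and> v \<noteq> w") (auto simp: KB_apply sw_def algebra_simps)
    then show ?thesis by (simp add: sum_subtractf)
  qed
  also have "\<dots> = fps_const (ALL' (w, w')) * PHH (w, w') -
    (if w = w' then fps_X * (\<Sum>v\<in>UNIV. if v \<noteq> w then fps_const (ALL' (w, v)) * fps_const (BEE (v, w)) * PHH (w, v) else 0) else 0)"
    by (auto simp: sum_distrib_left if_distrib cong: if_cong)
  finally show ?thesis .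
qed

lemma sum_sum_delta:
  fixes h :: "'a::finite \<Rightarrow> 'b::finite \<Rightarrow> 'c::comm_monoid_add"
  shows "(\<Sum>u\<in>UNIV. \<Sum>v\<in>UNIV. if u = w then h u v else 0) = (\<Sum>v\<in>UNIV. h w v)"
proof -
  have "(\<Sum>u\<in>UNIV. \<Sum>v\<in>UNIV. if u = w then h u v else 0) = (\<Sum>u\<in>UNIV. if u = w then (\<Sum>v\<in>UNIV. h u v) else 0)"
    by (rule sum.cong) auto
  also have "\<dots> = (\<Sum>v\<in>UNIV. h w v)" by (simp add: sum.delta)
  finally show ?thesis .
qed

lemma d_coef_eq: "d_coef A tail head \<tau> \<upsilon> u v = a_coef A tail head \<tau> u v * a_coef A tail head \<upsilon> v u"
  by (simp add: d_coef_def a_coef_def sum_product)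

lemma D_diag: "D_mat A tail head \<tau> \<upsilon> $ w $ w =
   (\<Sum>v\<in>UNIV. if v \<noteq> w then fps_const (ALL' (w, v)) * fps_const (BEE (v, w)) * PHH (w, v) else 0)"
proof -
  let ?d = "d_coef A tail head \<tau> \<upsilon>"
  define g where "g p = PHH p * fps_const ((if w = fst p then ?d (fst p) (snd p) else 0) +
                     (if w = snd p then ?d (snd p) (fst p) else 0))" for p
  define T where "T v = PHH (w, v) * fps_const (?d w v)" for v
  have "D_mat A tail head \<tau> \<upsilon> $ w $ w = (\<Sum>p\<in>Phi3 A tail head. g p)"
    unfolding D_mat_def g_def ph_def FF_def by (simp add: case_prod_beta)
  also have "\<dots> = (\<Sum>p\<in>{p. fst p < snd p}. g p)"
  proof (rule sum.mono_neutral_left)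
    show "Phi3 A tail head \<subseteq> {p. fst p < snd p}"
      by (auto simp: Phi3_def Phi_def)
    show "\<forall>p\<in>{p. fst p < snd p} - Phi3 A tail head. g p = 0"
    proof
      fix p assume p: "p \<in> {p. fst p < snd p} - Phi3 A tail head"
      then have "arcs_between A tail head (fst p) (snd p) = {} \<or> arcs_between A tail head (snd p) (fst p) = {}"
        by (auto simp: Phi3_def Phi_def case_prod_beta)
      then have "?d (fst p) (snd p) = 0" "?d (snd p) (fst p) = 0"
        by (auto simp: d_coef_def)
      then show "g p = 0" using p by (auto simp add: g_def)
    qed
  qed simp
  also have "\<dots> = (\<Sum>p\<in>UNIV. if fst p < snd p then g p else 0)"
    using sum.inter_filter[of UNIV g "\<lambda>p. fst p < snd p"] by simp
  also have "\<dots> = (\<Sum>u\<in>UNIV. \<Sum>v\<in>UNIV. if u < v then g (u, v) else 0)"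
    by (simp only: sum_pairs fst_conv snd_conv)
  also have "\<dots> = (\<Sum>u\<in>UNIV. \<Sum>v\<in>UNIV. (if v = w then (if u < v then T u else 0) else 0)
                  + (if u = w then (if u < v then T v else 0) else 0))"
  proof (intro sum.cong refl)
    fix u v :: 'v
    show "(if u < v then g (u, v) else 0) =
        (if v = w then (if u < v then T u else 0) else 0) + (if u = w then (if u < v then T v else 0) else 0)"
      using ph_sw[of A tail head \<upsilon> "(u, v)"]
      by (cases "u < v"; cases "u = w"; cases "v = w") (auto simp: g_def T_def sw_def)
  qed
  also have "\<dots> = (\<Sum>u\<in>UNIV. (if u < w then T u else 0)) + (\<Sum>v\<in>UNIV. (if w < v then T v else 0))"
    by (simp add: sum.distrib sum.delta sum_sum_delta)
  also have "\<dots> = (\<Sum>v\<in>UNIV. if v \<noteq> w then T v else 0)"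
    by (simp add: sum.distrib[symmetric]) (rule sum.cong, auto)
  also have "\<dots> = (\<Sum>v\<in>UNIV. if v \<noteq> w then fps_const (ALL' (w, v)) * fps_const (BEE (v, w)) * PHH (w, v) else 0)"
    by (rule sum.cong) (auto simp: T_def d_coef_eq al_def be_def mult_ac)
  finally show ?thesis .
qed

lemma Y_stmt: "(\<chi> w w'. (if w = w' then 1 else 0) - fps_X * A_mat A tail head \<tau> \<upsilon> $ w $ w'
                   + fps_X ^ 2 * D_mat A tail head \<tau> \<upsilon> $ w $ w') = (\<chi> i j. Ym A tail head \<tau> \<upsilon> i j)"
proof -
  have "(if w = w' then 1 else 0) - fps_X * A_mat A tail head \<tau> \<upsilon> $ w $ w'
                   + fps_X ^ 2 * D_mat A tail head \<tau> \<upsilon> $ w $ w' = Ym A tail head \<tau> \<upsilon> w w'" for w w'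
  proof (cases "w = w'")
    case True
    then show ?thesis
      by (simp add: Ym_def CKB_apply sm_def I1_def A_mat_def D_diag al_def ph_def FF_def
          algebra_simps power2_eq_square)
  next
    case False
    then show ?thesis
      by (simp add: Ym_def CKB_apply sm_def I1_def A_mat_def D_mat_def al_def ph_def FF_def
          algebra_simps)
  qed
  then show ?thesis by (simp add: vec_eq_iff)
qed

end

theorem mainTheorem1:
  fixes A :: "'e set" and tail head :: "'e \<Rightarrow> 'v::{finite,linorder}"
    and \<tau> \<upsilon> :: "'e \<Rightarrow> 'r::comm_ring_1"
  assumes Qalg: "\<And>n::nat. n > 0 \<Longrightarrow> \<exists>y::'r. of_nat n * y = 1"
    and finA: "finite A"
  shows "finv (zeta A tail head (thetaG A tail head \<tau> \<upsilon>)) =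
     f_Delta A tail head \<upsilon> *
     det (\<chi> w w'. (if w = w' then 1 else 0) - fps_X * A_mat A tail head \<tau> \<upsilon> $ w $ w'
                   + fps_X ^ 2 * D_mat A tail head \<tau> \<upsilon> $ w $ w')"
proof -
  let ?\<theta> = "thetaG A tail head \<tau> \<upsilon>"
  let ?Y = "Ym A tail head \<tau> \<upsilon>"
  let ?Z = "Zm A tail head \<tau> \<upsilon>"
  let ?K = "Ki A tail head \<upsilon>"
  let ?G = "Gm A tail head \<tau> \<upsilon>"
  let ?n = "of_nat CARD('v \<times> 'v) :: 'r fps"
  define g where "g = Abs_fps (\<lambda>m. if m = 0 then 0 else rinv (of_nat m :: 'r) * N_paths A tail head ?\<theta> m)"
  define D where "D = det (\<chi> i j. ?Y i j)"
  define f where "f = f_Delta A tail head \<upsilon>"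
  have zeta: "zeta A tail head ?\<theta> = fps_exp_R g" by (simp add: zeta_def g_def)
  have g0: "fps_nth g 0 = 0" by (simp add: g_def)
  have jac: "fps_deriv D = D * tr (mm (md ?Y) ?Z)"
    unfolding D_def by (rule jacobi_fun[OF Z_Y])
  have Xg: "fps_X * fps_deriv g = tr ?G - ?n"
  proof (rule fps_ext)
    fix n
    have l: "fps_nth (fps_X * fps_deriv g) n = of_nat n * fps_nth g n"
      by (simp add: fps_mult_fps_X_deriv_shift)
    have r: "fps_nth (tr ?G - ?n) n = tr (mpow (Mr A tail head \<tau> \<upsilon>) n) - (if n = 0 then of_nat CARD('v \<times> 'v) else 0)"
      by (simp add: tr_def fps_sum_nth Gm_nth)
    show "fps_nth (fps_X * fps_deriv g) n = fps_nth (tr ?G - ?n) n"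
    proof (cases n)
      case 0
      have "tr (mpow (Mr A tail head \<tau> \<upsilon>) 0) = (of_nat CARD('v \<times> 'v) :: 'r)"
        by (simp add: tr_def I1_def)
      then show ?thesis using 0 l r by simp
    next
      case (Suc k)
      have "of_nat n * fps_nth g n = of_nat n * rinv (of_nat n :: 'r) * N_paths A tail head ?\<theta> n"
        using Suc by (simp add: g_def mult.assoc)
      also have "\<dots> = N_paths A tail head ?\<theta> n" using rinv_nat[OF Qalg, of n] Suc by simp
      also have "\<dots> = tr (mpow (Mr A tail head \<tau> \<upsilon>) n)" by (rule N_paths_Mr[OF finA]) (simp add: Suc)
      finally show ?thesis using l r Suc by simp
    qed
  qed
  have Xf: "fps_X * fps_deriv f = f * (?n - tr ?K)"
    unfolding f_def by (rule X_deriv_f)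
  have Xtr: "fps_X * tr (mm (md ?Y) ?Z) = tr ?K - tr ?G"
    by (rule X_tr_Y)
  have QD: "fps_deriv (f * D) + (f * D) * fps_deriv g = 0"
  proof -
    have "fps_X * (fps_deriv (f * D) + (f * D) * fps_deriv g) =
        D * (fps_X * fps_deriv f) + f * D * (fps_X * tr (mm (md ?Y) ?Z)) + f * D * (fps_X * fps_deriv g)"
      by (simp add: jac algebra_simps)
    also have "\<dots> = D * (f * (?n - tr ?K)) + f * D * (tr ?K - tr ?G) + f * D * (tr ?G - ?n)"
      by (simp only: Xf Xtr Xg)
    also have "\<dots> = 0" by (simp add: algebra_simps)
    finally show ?thesis by (rule fps_X_mult_eq_0)
  qed
  have f0: "fps_nth f 0 = 1"
    unfolding f_def f_Delta_eq by (simp add: fps_nth_prod_0 FF_0)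
  have D0: "fps_nth D 0 = 1"
  proof -
    have "(\<chi> i j. fps_nth ((\<chi> i j. ?Y i j) $ i $ j) 0) = mat 1"
      by (simp add: vec_eq_iff mat_def Ym_def sm_def I1_def)
    then show ?thesis unfolding D_def by (simp add: det_nth_0)
  qed
  have Q0: "fps_nth (f * D) 0 = 1" by (simp add: f0 D0)
  have "finv (zeta A tail head ?\<theta>) = f * D"
    unfolding zeta by (rule exp_R_inverse[OF Qalg g0 Q0 QD])
  then show ?thesis unfolding Y_stmt f_def D_def .
qed

end
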